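(* Let $\mathcal H$ be a graded connected Hopf algebra over a field $\Bbbk$ and $\varphi,\psi\colon\mathcal H\to\Bbbk$ characters. Then: (a) $S(\varphi,\psi)=\{h\in\mathcal H : f(h)=0\ \text{for all } f\in I(\varphi,\psi)\}$; (b) $I(\varphi,\psi)$ is a graded Hopf ideal of $\mathcal H^*$; (c) $S(\varphi,\psi)$ is a graded Hopf subalgebra of $\mathcal H$; (d) a homogeneous element $h\in\mathcal H$ belongs to $S(\varphi,\psi)$ if and only if $\bigl(\mathrm{id}\otimes(\varphi-\psi)\otimes\mathrm{id}\bigr)\circ\Delta^{(2)}(h)=0$.
   Context: $\mathcal H=\bigoplus_{n\ge0}\mathcal H_n$ is graded connected ($\mathcal H_0=\Bbbk\cdot1$, graded structure maps) with each $\mathcal H_n$ finite-dimensional; $\Delta^{(2)}=(\Delta\otimes\mathrm{id})\circ\Delta$. $\mathcal H^*=\bigoplus_n(\mathcal H_n)^*$ is the graded dual Hopf algebra (product = convolution). For a linear functional $\varphi$, $\varphi_n=\varphi|_{\mathcal H_n}\in(\mathcal H_n)^*$. A character is an algebra morphism $\mathcal H\to\Bbbk$. $S(\varphi,\psi)$ denotes the largest graded subcoalgebra of $\mathcal H$ on which $\varphi(h)=\psi(h)$ for all $h$, and $I(\varphi,\psi)$ denotes the ideal of $\mathcal H^*$ generated by the elements $\varphi_n-\psi_n$, $n\ge0$. *)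

theory Defs
  imports Main "HOL-Library.Function_Algebras"
begin

text \<open>Coordinate model of a graded connected Hopf algebra over a field 'k.
  H has a homogeneous basis indexed by type 'b, with degree map deg, finitely many
  basis elements in each degree, and the unit 1 is the basis element u spanning H_0.
  Elements of H are finitely supported coefficient functions 'b => 'k; elements of
  H (x) H are finitely supported functions 'b * 'b => 'k.
  Structure constants: b*c = sum_d M b c d d;  Delta b = sum_{c,d} D b c d (c (x) d);
  counit eps; antipode S b = sum_d A b d d.
  A linear functional on H is given by its values on the basis ('b => 'k); the graded
  dual H* = (+)_n (H_n)^* consists of the finitely supported ones.\<close>

definition supp :: "('a \<Rightarrow> 'k::zero) \<Rightarrow> 'a set" where
  "supp v = {b. v b \<noteq> 0}"

definition dset :: "('b \<Rightarrow> nat) \<Rightarrow> nat \<Rightarrow> 'b set" where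
  "dset deg n = {b. deg b = n}"

definition lowset :: "('b \<Rightarrow> nat) \<Rightarrow> nat \<Rightarrow> 'b set" where
  "lowset deg n = {b. deg b \<le> n}"

definition graded_connected_hopf ::
  "('b \<Rightarrow> nat) \<Rightarrow> 'b \<Rightarrow> ('b \<Rightarrow> 'b \<Rightarrow> 'b \<Rightarrow> 'k::field) \<Rightarrow> ('b \<Rightarrow> 'b \<Rightarrow> 'b \<Rightarrow> 'k)
   \<Rightarrow> ('b \<Rightarrow> 'k) \<Rightarrow> ('b \<Rightarrow> 'b \<Rightarrow> 'k) \<Rightarrow> bool" where
  "graded_connected_hopf deg u M D eps A \<longleftrightarrow>
     (\<forall>n. finite (dset deg n)) \<and> dset deg 0 = {u} \<and>
     \<comment> \<open>grading of the structure maps\<close>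
     (\<forall>b c d. M b c d \<noteq> 0 \<longrightarrow> deg d = deg b + deg c) \<and>
     (\<forall>b c d. D b c d \<noteq> 0 \<longrightarrow> deg c + deg d = deg b) \<and>
     (\<forall>b d. A b d \<noteq> 0 \<longrightarrow> deg d = deg b) \<and>
     \<comment> \<open>associativity and unit\<close>
     (\<forall>b c d f. (\<Sum>e\<in>dset deg (deg b + deg c). M b c e * M e d f)
                = (\<Sum>e\<in>dset deg (deg c + deg d). M c d e * M b e f)) \<and>
     (\<forall>b d. M u b d = (if d = b then 1 else 0) \<and> M b u d = (if d = b then 1 else 0)) \<and>
     \<comment> \<open>coassociativity and counit\<close>
     (\<forall>b c d f. (\<Sum>e\<in>dset deg (deg c + deg d). D b e f * D e c d)
                = (\<Sum>e\<in>dset deg (deg d + deg f). D b c e * D e d f)) \<and>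
     (\<forall>b d. (\<Sum>c\<in>lowset deg (deg b). eps c * D b c d) = (if d = b then 1 else 0) \<and>
            (\<Sum>c\<in>lowset deg (deg b). D b d c * eps c) = (if d = b then 1 else 0)) \<and>
     \<comment> \<open>bialgebra compatibility\<close>
     (\<forall>b c p q. (\<Sum>e\<in>dset deg (deg b + deg c). M b c e * D e p q)
        = (\<Sum>b1\<in>lowset deg (deg b). \<Sum>b2\<in>lowset deg (deg b).
           \<Sum>c1\<in>lowset deg (deg c). \<Sum>c2\<in>lowset deg (deg c).
             D b b1 b2 * D c c1 c2 * M b1 c1 p * M b2 c2 q)) \<and>
     (\<forall>b c. (\<Sum>e\<in>dset deg (deg b + deg c). M b c e * eps e) = eps b * eps c) \<and>
     (\<forall>p q. D u p q = (if p = u \<and> q = u then 1 else 0)) \<and> eps u = 1 \<and>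
     \<comment> \<open>antipode\<close>
     (\<forall>b f. (\<Sum>c\<in>lowset deg (deg b). \<Sum>d\<in>lowset deg (deg b). \<Sum>e\<in>dset deg (deg c).
                 D b c d * A c e * M e d f) = eps b * (if f = u then 1 else 0) \<and>
            (\<Sum>c\<in>lowset deg (deg b). \<Sum>d\<in>lowset deg (deg b). \<Sum>e\<in>dset deg (deg d).
                 D b c d * A d e * M c e f) = eps b * (if f = u then 1 else 0))"

definition Hset :: "('a \<Rightarrow> 'k::zero) set" where
  "Hset = {h. finite (supp h)}"

definition subsp :: "('a \<Rightarrow> 'k::field) set \<Rightarrow> bool" where
  "subsp V \<longleftrightarrow> 0 \<in> V \<and> (\<forall>x\<in>V. \<forall>y\<in>V. x + y \<in> V) \<and> (\<forall>c x. x \<in> V \<longrightarrow> (\<lambda>p. c * x p) \<in> V)"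

definition lspan :: "('a \<Rightarrow> 'k::field) set \<Rightarrow> ('a \<Rightarrow> 'k) set" where
  "lspan X = {v. \<exists>F c. finite F \<and> F \<subseteq> X \<and> v = (\<Sum>x\<in>F. (\<lambda>p. c x * x p))}"

definition tprod :: "('b \<Rightarrow> 'k::field) \<Rightarrow> ('b \<Rightarrow> 'k) \<Rightarrow> ('b \<times> 'b \<Rightarrow> 'k)" where
  "tprod x y = (\<lambda>(p, q). x p * y q)"

definition tspan :: "('b \<Rightarrow> 'k::field) set \<Rightarrow> ('b \<Rightarrow> 'k) set \<Rightarrow> ('b \<times> 'b \<Rightarrow> 'k) set" where
  "tspan V W = lspan {tprod x y | x y. x \<in> V \<and> y \<in> W}"

definition comp :: "('b \<Rightarrow> nat) \<Rightarrow> nat \<Rightarrow> ('b \<Rightarrow> 'k::zero) \<Rightarrow> ('b \<Rightarrow> 'k)" where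
  "comp deg n x = (\<lambda>b. if deg b = n then x b else 0)"

definition graded_subsp :: "('b \<Rightarrow> nat) \<Rightarrow> ('b \<Rightarrow> 'k::zero) set \<Rightarrow> bool" where
  "graded_subsp deg V \<longleftrightarrow> (\<forall>x\<in>V. \<forall>n. comp deg n x \<in> V)"

definition homogeneous :: "('b \<Rightarrow> nat) \<Rightarrow> ('b \<Rightarrow> 'k::zero) \<Rightarrow> bool" where
  "homogeneous deg h \<longleftrightarrow> (\<exists>n. \<forall>b. h b \<noteq> 0 \<longrightarrow> deg b = n)"

definition hmult :: "('b \<Rightarrow> 'b \<Rightarrow> 'b \<Rightarrow> 'k::field) \<Rightarrow> ('b \<Rightarrow> 'k) \<Rightarrow> ('b \<Rightarrow> 'k) \<Rightarrow> ('b \<Rightarrow> 'k)" where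
  "hmult M x y = (\<lambda>d. \<Sum>b\<in>supp x. \<Sum>c\<in>supp y. x b * y c * M b c d)"

definition hcomult :: "('b \<Rightarrow> 'b \<Rightarrow> 'b \<Rightarrow> 'k::field) \<Rightarrow> ('b \<Rightarrow> 'k) \<Rightarrow> ('b \<times> 'b \<Rightarrow> 'k)" where
  "hcomult D x = (\<lambda>(p, q). \<Sum>b\<in>supp x. x b * D b p q)"

definition hantip :: "('b \<Rightarrow> 'b \<Rightarrow> 'k::field) \<Rightarrow> ('b \<Rightarrow> 'k) \<Rightarrow> ('b \<Rightarrow> 'k)" where
  "hantip A x = (\<lambda>d. \<Sum>b\<in>supp x. x b * A b d)"

definition unitv :: "'b \<Rightarrow> ('b \<Rightarrow> 'k::field)" where
  "unitv u = (\<lambda>b. if b = u then 1 else 0)"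

definition pair :: "('b \<Rightarrow> 'k::field) \<Rightarrow> ('b \<Rightarrow> 'k) \<Rightarrow> 'k" where
  "pair f h = (\<Sum>b\<in>supp h. f b * h b)"

definition character :: "('b \<Rightarrow> nat) \<Rightarrow> 'b \<Rightarrow> ('b \<Rightarrow> 'b \<Rightarrow> 'b \<Rightarrow> 'k::field) \<Rightarrow> ('b \<Rightarrow> 'k) \<Rightarrow> bool" where
  "character deg u M phi \<longleftrightarrow> phi u = 1 \<and>
     (\<forall>b c. phi b * phi c = (\<Sum>e\<in>dset deg (deg b + deg c). M b c e * phi e))"

definition graded_subcoalg :: "('b \<Rightarrow> nat) \<Rightarrow> ('b \<Rightarrow> 'b \<Rightarrow> 'b \<Rightarrow> 'k::field) \<Rightarrow> ('b \<Rightarrow> 'k) set \<Rightarrow> bool" where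
  "graded_subcoalg deg D C \<longleftrightarrow> C \<subseteq> Hset \<and> subsp C \<and> graded_subsp deg C \<and>
     (\<forall>x\<in>C. hcomult D x \<in> tspan C C)"

definition Sset :: "('b \<Rightarrow> nat) \<Rightarrow> ('b \<Rightarrow> 'b \<Rightarrow> 'b \<Rightarrow> 'k::field) \<Rightarrow> ('b \<Rightarrow> 'k) \<Rightarrow> ('b \<Rightarrow> 'k) \<Rightarrow> ('b \<Rightarrow> 'k) set" where
  "Sset deg D phi psi = (GREATEST C. graded_subcoalg deg D C \<and> (\<forall>h\<in>C. pair phi h = pair psi h))"

text \<open>The graded dual H*: convolution product, coproduct (dual of M), antipode, counit f |-> f u.\<close>
definition conv :: "('b \<Rightarrow> nat) \<Rightarrow> ('b \<Rightarrow> 'b \<Rightarrow> 'b \<Rightarrow> 'k::field) \<Rightarrow> ('b \<Rightarrow> 'k) \<Rightarrow> ('b \<Rightarrow> 'k) \<Rightarrow> ('b \<Rightarrow> 'k)" where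
  "conv deg D f g = (\<lambda>b. \<Sum>c\<in>lowset deg (deg b). \<Sum>d\<in>lowset deg (deg b). D b c d * f c * g d)"

definition dual_comult :: "('b \<Rightarrow> nat) \<Rightarrow> ('b \<Rightarrow> 'b \<Rightarrow> 'b \<Rightarrow> 'k::field) \<Rightarrow> ('b \<Rightarrow> 'k) \<Rightarrow> ('b \<times> 'b \<Rightarrow> 'k)" where
  "dual_comult deg M f = (\<lambda>(b, c). \<Sum>e\<in>dset deg (deg b + deg c). M b c e * f e)"

definition dual_antip :: "('b \<Rightarrow> nat) \<Rightarrow> ('b \<Rightarrow> 'b \<Rightarrow> 'k::field) \<Rightarrow> ('b \<Rightarrow> 'k) \<Rightarrow> ('b \<Rightarrow> 'k)" where
  "dual_antip deg A f = (\<lambda>b. \<Sum>d\<in>dset deg (deg b). A b d * f d)"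

definition dual_ideal :: "('b \<Rightarrow> nat) \<Rightarrow> ('b \<Rightarrow> 'b \<Rightarrow> 'b \<Rightarrow> 'k::field) \<Rightarrow> ('b \<Rightarrow> 'k) set \<Rightarrow> bool" where
  "dual_ideal deg D I \<longleftrightarrow> I \<subseteq> Hset \<and> subsp I \<and>
     (\<forall>f\<in>I. \<forall>g\<in>Hset. conv deg D f g \<in> I \<and> conv deg D g f \<in> I)"

definition Iset :: "('b \<Rightarrow> nat) \<Rightarrow> ('b \<Rightarrow> 'b \<Rightarrow> 'b \<Rightarrow> 'k::field) \<Rightarrow> ('b \<Rightarrow> 'k) \<Rightarrow> ('b \<Rightarrow> 'k) \<Rightarrow> ('b \<Rightarrow> 'k) set" where
  "Iset deg D phi psi = \<Inter>{I. dual_ideal deg D I \<and> (\<forall>n. comp deg n phi - comp deg n psi \<in> I)}"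

definition graded_hopf_ideal_dual ::
  "('b \<Rightarrow> nat) \<Rightarrow> 'b \<Rightarrow> ('b \<Rightarrow> 'b \<Rightarrow> 'b \<Rightarrow> 'k::field) \<Rightarrow> ('b \<Rightarrow> 'b \<Rightarrow> 'b \<Rightarrow> 'k) \<Rightarrow> ('b \<Rightarrow> 'b \<Rightarrow> 'k)
   \<Rightarrow> ('b \<Rightarrow> 'k) set \<Rightarrow> bool" where
  "graded_hopf_ideal_dual deg u M D A I \<longleftrightarrow> dual_ideal deg D I \<and> graded_subsp deg I \<and>
     (\<forall>f\<in>I. dual_comult deg M f \<in>
        lspan ({tprod x y | x y. x \<in> I \<and> y \<in> Hset} \<union> {tprod x y | x y. x \<in> Hset \<and> y \<in> I})) \<and>
     (\<forall>f\<in>I. f u = 0) \<and>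
     (\<forall>f\<in>I. dual_antip deg A f \<in> I)"

definition graded_hopf_subalg ::
  "('b \<Rightarrow> nat) \<Rightarrow> 'b \<Rightarrow> ('b \<Rightarrow> 'b \<Rightarrow> 'b \<Rightarrow> 'k::field) \<Rightarrow> ('b \<Rightarrow> 'b \<Rightarrow> 'b \<Rightarrow> 'k) \<Rightarrow> ('b \<Rightarrow> 'b \<Rightarrow> 'k)
   \<Rightarrow> ('b \<Rightarrow> 'k) set \<Rightarrow> bool" where
  "graded_hopf_subalg deg u M D A C \<longleftrightarrow> C \<subseteq> Hset \<and> subsp C \<and> graded_subsp deg C \<and>
     unitv u \<in> C \<and> (\<forall>x\<in>C. \<forall>y\<in>C. hmult M x y \<in> C) \<and>
     (\<forall>x\<in>C. hcomult D x \<in> tspan C C) \<and> (\<forall>x\<in>C. hantip A x \<in> C)"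

text \<open>(id (x) chi (x) id) o Delta^(2) applied to h, as an element of H (x) H.\<close>
definition delta2_mid :: "('b \<Rightarrow> nat) \<Rightarrow> ('b \<Rightarrow> 'b \<Rightarrow> 'b \<Rightarrow> 'k::field) \<Rightarrow> ('b \<Rightarrow> 'k) \<Rightarrow> ('b \<Rightarrow> 'k) \<Rightarrow> ('b \<times> 'b \<Rightarrow> 'k)" where
  "delta2_mid deg D chi h = (\<lambda>(p, q). \<Sum>b\<in>supp h. h b *
     (\<Sum>e\<in>lowset deg (deg b). \<Sum>c\<in>lowset deg (deg b). D b e q * D e p c * chi c))"

end

theory Submission
  imports Defs
begin

lemma sum_fun_app: "(sum f A) x = sum (\<lambda>a. f a x) A"
  by (induction A rule: infinite_finite_induct) auto

lemma sum_eq_sup: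
  assumes "finite A" "finite B" "\<And>x. x \<in> A \<Longrightarrow> x \<notin> B \<Longrightarrow> f x = 0"
    "\<And>x. x \<in> B \<Longrightarrow> x \<notin> A \<Longrightarrow> f x = 0"
  shows "sum f A = sum f B"
proof -
  have "sum f A = sum f (A \<union> B)"
    by (rule sum.mono_neutral_left) (use assms in auto)
  also have "\<dots> = sum f B"
    by (rule sum.mono_neutral_right) (use assms in auto)
  finally show ?thesis .
qed

lemma pair_superset:
  assumes "finite S" "supp h \<subseteq> S"
  shows "pair f h = (\<Sum>b\<in>S. f b * h b)"
  unfolding pair_def
  by (rule sum.mono_neutral_left) (use assms in \<open>auto simp: supp_def\<close>)

lemma Hset_iff: "h \<in> Hset \<longleftrightarrow> finite (supp h)"
  by (simp add: Hset_def)

lemma subsp_scale: "subsp V \<Longrightarrow> x \<in> V \<Longrightarrow> (\<lambda>p. c * x p) \<in> V"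
  by (simp add: subsp_def)

lemma subsp_add: "subsp V \<Longrightarrow> x \<in> V \<Longrightarrow> y \<in> V \<Longrightarrow> x + y \<in> V"
  by (simp add: subsp_def)

lemma subsp_zero: "subsp V \<Longrightarrow> 0 \<in> V"
  by (simp add: subsp_def)

lemma subsp_neg: "subsp V \<Longrightarrow> x \<in> V \<Longrightarrow> - x \<in> V"
proof -
  assume "subsp V" "x \<in> V"
  then have "(\<lambda>p. (-1) * x p) \<in> V" by (rule subsp_scale)
  moreover have "(\<lambda>p. (-1) * x p) = - x" by (rule ext) simp
  ultimately show ?thesis by simp
qed

lemma subsp_diff: "subsp V \<Longrightarrow> x \<in> V \<Longrightarrow> y \<in> V \<Longrightarrow> x - y \<in> V"
  using subsp_add[of V x "- y"] subsp_neg[of V y] by simp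

lemma subsp_sum: "subsp V \<Longrightarrow> (\<And>i. i \<in> F \<Longrightarrow> g i \<in> V) \<Longrightarrow> sum g F \<in> V"
  by (induction F rule: infinite_finite_induct) (auto simp: subsp_zero subsp_add)

lemma lspan_induct:
  assumes "v \<in> lspan X" "P 0" "\<And>x c. x \<in> X \<Longrightarrow> P (\<lambda>p. c * x p)"
    "\<And>a b. P a \<Longrightarrow> P b \<Longrightarrow> P (a + b)"
  shows "P v"
proof -
  obtain F c where F: "finite F" "F \<subseteq> X" "v = (\<Sum>x\<in>F. (\<lambda>p. c x * x p))"
    using assms(1) unfolding lspan_def by blast
  have "P (\<Sum>x\<in>F. (\<lambda>p. c x * x p))" using F(1,2)
    by (induction F rule: finite_induct) (auto intro: assms)
  then show ?thesis using F by simp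
qed

lemma lspan_sub: "subsp V \<Longrightarrow> X \<subseteq> V \<Longrightarrow> lspan X \<subseteq> V"
  by (auto elim!: lspan_induct intro: subsp_zero subsp_add subsp_scale)

lemma lspan_gen: "x \<in> X \<Longrightarrow> x \<in> lspan X"
  unfolding lspan_def
  by (rule CollectI, rule exI[of _ "{x}"], rule exI[of _ "\<lambda>_. 1"]) auto

lemma subsp_lspan: "subsp (lspan X)"
  unfolding subsp_def
proof (intro conjI ballI allI impI)
  show "0 \<in> lspan X" unfolding lspan_def
    by (rule CollectI, rule exI[of _ "{}"]) auto
next
  fix x y assume x: "x \<in> lspan X" and y: "y \<in> lspan X"
  obtain F c where F: "finite F" "F \<subseteq> X" "x = (\<Sum>z\<in>F. (\<lambda>p. c z * z p))"
    using x unfolding lspan_def by blast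
  obtain G d where G: "finite G" "G \<subseteq> X" "y = (\<Sum>z\<in>G. (\<lambda>p. d z * z p))"
    using y unfolding lspan_def by blast
  define e where "e z = (if z \<in> F then c z else 0) + (if z \<in> G then d z else 0)" for z
  have 1: "x = (\<Sum>z\<in>F \<union> G. (\<lambda>p. (if z \<in> F then c z else 0) * z p))"
    unfolding F(3) by (rule sum.mono_neutral_cong_left) (use F G in \<open>simp_all add: zero_fun_def\<close>)
  have 2: "y = (\<Sum>z\<in>F \<union> G. (\<lambda>p. (if z \<in> G then d z else 0) * z p))"
    unfolding G(3) by (rule sum.mono_neutral_cong_left) (use F G in \<open>simp_all add: zero_fun_def\<close>)
  have "x + y = (\<Sum>z\<in>F \<union> G. (\<lambda>p. e z * z p))"
    unfolding 1 2 sum.distrib[symmetric] e_def by (rule sum.cong) (simp_all add: fun_eq_iff distrib_right)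
  then show "x + y \<in> lspan X" unfolding lspan_def mem_Collect_eq
    by (intro exI[of _ "F \<union> G"] exI[of _ e]) (use F G in simp)
next
  fix a x assume x: "x \<in> lspan X"
  obtain F c where F: "finite F" "F \<subseteq> X" "x = (\<Sum>z\<in>F. (\<lambda>p. c z * z p))"
    using x unfolding lspan_def by blast
  have "(\<lambda>p. a * x p) = (\<Sum>z\<in>F. (\<lambda>p. (a * c z) * z p))"
    unfolding F(3) by (auto simp: fun_eq_iff sum_fun_app sum_distrib_left mult.assoc)
  then show "(\<lambda>p. a * x p) \<in> lspan X" unfolding lspan_def mem_Collect_eq
    by (intro exI[of _ F] exI[of _ "\<lambda>z. a * c z"]) (use F in simp)
qed

lemma lspan_sum: "(\<And>i. i \<in> F \<Longrightarrow> g i \<in> X) \<Longrightarrow> sum g F \<in> lspan X"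
  by (rule subsp_sum[OF subsp_lspan]) (auto intro: lspan_gen)

lemma subsp_Hset: "subsp Hset"
proof -
  have "supp (x + y) \<subseteq> supp x \<union> supp y" for x y :: "'a \<Rightarrow> 'k::field"
    by (auto simp: supp_def)
  moreover have "supp (\<lambda>p. c * x p) \<subseteq> supp x" for c and x :: "'a \<Rightarrow> 'k::field"
    by (auto simp: supp_def)
  ultimately show ?thesis unfolding subsp_def Hset_def
    by (auto simp: supp_def intro: finite_subset)
qed

lemma supp_tprod: "supp (tprod x y) = supp x \<times> supp y"
  by (auto simp: supp_def tprod_def)

lemma tprod_Hset: "x \<in> Hset \<Longrightarrow> y \<in> Hset \<Longrightarrow> tprod x y \<in> Hset"
  by (simp add: Hset_def supp_tprod)

lemma pair_tprod: "pair (tprod f g) (tprod x y) = pair f x * pair g y"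
  unfolding pair_def supp_tprod sum_product sum.cartesian_product
  by (rule sum.cong) (auto simp: tprod_def)

lemma pair_add1: "pair (f + g) h = pair f h + pair g h"
  by (simp add: pair_def sum.distrib algebra_simps)

lemma pair_scale1: "pair (\<lambda>p. c * f p) h = c * pair f h"
  by (simp add: pair_def sum_distrib_left algebra_simps)

lemma pair_zero1: "pair 0 h = 0"
  by (simp add: pair_def)

lemma pair_add2: "x \<in> Hset \<Longrightarrow> y \<in> Hset \<Longrightarrow> pair f (x + y) = pair f x + pair f y"
proof -
  assume "x \<in> Hset" "y \<in> Hset"
  then have fin: "finite (supp x \<union> supp y)" by (simp add: Hset_def)
  have s: "supp (x + y) \<subseteq> supp x \<union> supp y" by (auto simp: supp_def)
  show ?thesis
    using pair_superset[OF fin s, of f] pair_superset[OF fin, of x f] pair_superset[OF fin, of y f]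
    by (simp add: sum.distrib algebra_simps)
qed

lemma pair_scale2: "pair f (\<lambda>p. c * x p) = c * pair f x"
proof (cases "c = 0")
  case True then show ?thesis by (simp add: pair_def supp_def)
next
  case False
  then have "supp (\<lambda>p. c * x p) = supp x" by (auto simp: supp_def)
  then show ?thesis by (simp add: pair_def sum_distrib_left algebra_simps)
qed

lemma pair_zero2: "pair f 0 = 0"
  by (simp add: pair_def supp_def)

lemma lspan_Hset: "X \<subseteq> Hset \<Longrightarrow> lspan X \<subseteq> Hset"
  by (rule lspan_sub[OF subsp_Hset])

lemma sum_single:
  assumes "finite S" "a \<in> S" "\<And>x. x \<in> S \<Longrightarrow> x \<noteq> a \<Longrightarrow> f x = 0"
  shows "sum f S = f a"
proof -
  have "sum f S = f a + sum f (S - {a})" using assms by (simp add: sum.remove)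
  also have "sum f (S - {a}) = 0" using assms by (intro sum.neutral) auto
  finally show ?thesis by simp
qed

locale gch =
  fixes deg :: "'b \<Rightarrow> nat" and u :: 'b
    and M D :: "'b \<Rightarrow> 'b \<Rightarrow> 'b \<Rightarrow> 'k::field" and eps :: "'b \<Rightarrow> 'k" and A :: "'b \<Rightarrow> 'b \<Rightarrow> 'k"
  assumes H: "graded_connected_hopf deg u M D eps A"
begin

lemmas HH = H[unfolded graded_connected_hopf_def]

lemma fin_dset: "finite (dset deg n)" using H by (simp add: graded_connected_hopf_def)
lemma dset0: "dset deg 0 = {u}" using H by (simp add: graded_connected_hopf_def)
lemma in_dset[simp]: "b \<in> dset deg n \<longleftrightarrow> deg b = n" by (simp add: dset_def)
lemma in_lowset[simp]: "b \<in> lowset deg n \<longleftrightarrow> deg b \<le> n" by (simp add: lowset_def)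
lemma deg0: "deg b = 0 \<longleftrightarrow> b = u"
  using dset0 by (auto simp: dset_def)
lemma deg_u[simp]: "deg u = 0" using deg0 by simp
lemma M_deg: "M b c d \<noteq> 0 \<Longrightarrow> deg d = deg b + deg c"
  using H by (simp add: graded_connected_hopf_def)
lemma D_deg: "D b c d \<noteq> 0 \<Longrightarrow> deg c + deg d = deg b"
  using H by (simp add: graded_connected_hopf_def)
lemma A_deg: "A b d \<noteq> 0 \<Longrightarrow> deg d = deg b"
  using H by (simp add: graded_connected_hopf_def)
lemma M_assoc: "(\<Sum>e\<in>dset deg (deg b + deg c). M b c e * M e d f)
                = (\<Sum>e\<in>dset deg (deg c + deg d). M c d e * M b e f)"
  using HH[THEN conjunct2, THEN conjunct2, THEN conjunct2, THEN conjunct2, THEN conjunct2, THEN conjunct1] by (simp only:)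
lemma M_unitL: "M u b d = (if d = b then 1 else 0)"
  using HH[THEN conjunct2, THEN conjunct2, THEN conjunct2, THEN conjunct2, THEN conjunct2, THEN conjunct2, THEN conjunct1] by blast
lemma M_unitR: "M b u d = (if d = b then 1 else 0)"
  using HH[THEN conjunct2, THEN conjunct2, THEN conjunct2, THEN conjunct2, THEN conjunct2, THEN conjunct2, THEN conjunct1] by blast
lemma D_coassoc: "(\<Sum>e\<in>dset deg (deg c + deg d). D b e f * D e c d)
                = (\<Sum>e\<in>dset deg (deg d + deg f). D b c e * D e d f)"
  using HH[THEN conjunct2, THEN conjunct2, THEN conjunct2, THEN conjunct2, THEN conjunct2, THEN conjunct2, THEN conjunct2, THEN conjunct1] by (simp only:)
lemma counitL: "(\<Sum>c\<in>lowset deg (deg b). eps c * D b c d) = (if d = b then 1 else 0)"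
  using HH[THEN conjunct2, THEN conjunct2, THEN conjunct2, THEN conjunct2, THEN conjunct2, THEN conjunct2, THEN conjunct2, THEN conjunct2, THEN conjunct1] by blast
lemma counitR: "(\<Sum>c\<in>lowset deg (deg b). D b d c * eps c) = (if d = b then 1 else 0)"
  using HH[THEN conjunct2, THEN conjunct2, THEN conjunct2, THEN conjunct2, THEN conjunct2, THEN conjunct2, THEN conjunct2, THEN conjunct2, THEN conjunct1] by blast
lemma compat: "(\<Sum>e\<in>dset deg (deg b + deg c). M b c e * D e p q)
        = (\<Sum>b1\<in>lowset deg (deg b). \<Sum>b2\<in>lowset deg (deg b).
           \<Sum>c1\<in>lowset deg (deg c). \<Sum>c2\<in>lowset deg (deg c).
             D b b1 b2 * D c c1 c2 * M b1 c1 p * M b2 c2 q)"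
  using HH[THEN conjunct2, THEN conjunct2, THEN conjunct2, THEN conjunct2, THEN conjunct2, THEN conjunct2, THEN conjunct2, THEN conjunct2, THEN conjunct2, THEN conjunct1] by (simp only:)
lemma D_u: "D u p q = (if p = u \<and> q = u then 1 else 0)"
  using HH[THEN conjunct2, THEN conjunct2, THEN conjunct2, THEN conjunct2, THEN conjunct2, THEN conjunct2, THEN conjunct2, THEN conjunct2, THEN conjunct2, THEN conjunct2, THEN conjunct2, THEN conjunct1] by (simp only:)
lemma eps_u: "eps u = 1"
  using HH[THEN conjunct2, THEN conjunct2, THEN conjunct2, THEN conjunct2, THEN conjunct2, THEN conjunct2, THEN conjunct2, THEN conjunct2, THEN conjunct2, THEN conjunct2, THEN conjunct2, THEN conjunct2, THEN conjunct1] by (simp only:)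
lemma antipL: "(\<Sum>c\<in>lowset deg (deg b). \<Sum>d\<in>lowset deg (deg b). \<Sum>e\<in>dset deg (deg c).
                 D b c d * A c e * M e d f) = eps b * (if f = u then 1 else 0)"
  using HH[THEN conjunct2, THEN conjunct2, THEN conjunct2, THEN conjunct2, THEN conjunct2, THEN conjunct2, THEN conjunct2, THEN conjunct2, THEN conjunct2, THEN conjunct2, THEN conjunct2, THEN conjunct2, THEN conjunct2] by blast

lemma fin_lowset: "finite (lowset deg n)"
proof -
  have "lowset deg n = (\<Union>i\<in>{..n}. dset deg i)" by auto
  then show ?thesis using fin_dset by simp
qed

lemma D_low1: "D b c d \<noteq> 0 \<Longrightarrow> deg c \<le> deg b" using D_deg by fastforce
lemma D_low2: "D b c d \<noteq> 0 \<Longrightarrow> deg d \<le> deg b" using D_deg by fastforce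

lemma D_c_u: "D b c u = (if c = b then 1 else 0)"
proof (cases "deg c = deg b")
  case True
  have "(\<Sum>c'\<in>lowset deg (deg b). D b c c' * eps c') = D b c u * eps u"
  proof (rule sum_single)
    fix x assume "x \<noteq> u"
    then have "deg x \<noteq> 0" using deg0 by simp
    then have "D b c x = 0" using D_deg[of b c x] True by auto
    then show "D b c x * eps x = 0" by simp
  qed (use fin_lowset in auto)
  then show ?thesis using counitR[of b c] eps_u by simp
next
  case False
  then show ?thesis using D_deg[of b c u] by auto
qed

lemma D_u_d: "D b u d = (if d = b then 1 else 0)"
proof (cases "deg d = deg b")
  case True
  have "(\<Sum>c\<in>lowset deg (deg b). eps c * D b c d) = eps u * D b u d"
  proof (rule sum_single)
    fix x assume "x \<noteq> u"
    then have "deg x \<noteq> 0" using deg0 by simp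
    then have "D b x d = 0" using D_deg[of b x d] True by auto
    then show "eps x * D b x d = 0" by simp
  qed (use fin_lowset in auto)
  then show ?thesis using counitL[of b d] eps_u by simp
next
  case False
  then show ?thesis using D_deg[of b u d] by auto
qed

lemma eps_eq: "eps b = (if b = u then 1 else 0)"
proof -
  have "(\<Sum>c\<in>lowset deg (deg b). eps c * D b c u) = eps b * D b b u"
    by (rule sum_single) (use fin_lowset in \<open>auto simp: D_c_u\<close>)
  then show ?thesis using counitL[of b u] by (simp add: D_c_u)
qed

definition bd :: "('b \<Rightarrow> 'k) \<Rightarrow> nat" where
  "bd h = Max (insert 0 (deg ` supp h))"

lemma bd_ge: "h \<in> Hset \<Longrightarrow> h b \<noteq> 0 \<Longrightarrow> deg b \<le> bd h"
  unfolding bd_def Hset_def by (rule Max_ge) (auto simp: supp_def)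

lemma supp_low: "h \<in> Hset \<Longrightarrow> supp h \<subseteq> lowset deg (bd h)"
  using bd_ge by (auto simp: supp_def)

lemma Hset_low: "supp h \<subseteq> lowset deg n \<Longrightarrow> h \<in> Hset"
  using fin_lowset by (auto simp: Hset_def intro: finite_subset)

lemma Hset_lowI: "(\<And>b. h b \<noteq> 0 \<Longrightarrow> deg b \<le> n) \<Longrightarrow> h \<in> Hset"
  by (rule Hset_low[of h n]) (auto simp: supp_def)

lemma unitv_Hset: "(unitv p :: 'b \<Rightarrow> 'k) \<in> Hset"
  by (rule Hset_lowI[of _ "deg p"]) (auto simp: unitv_def split: if_splits)

lemma comp_Hset: "comp deg n (f :: 'b \<Rightarrow> 'k) \<in> Hset"
  by (rule Hset_lowI[of _ n]) (auto simp: comp_def split: if_splits)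

end

context gch begin

lemma D_zero1: "deg b < deg c \<Longrightarrow> D b c d = 0" using D_low1 by fastforce
lemma D_zero2: "deg b < deg d \<Longrightarrow> D b c d = 0" using D_low2 by fastforce

lemma conv_eq:
  assumes "finite S" "finite S'" "lowset deg (deg b) \<subseteq> S" "lowset deg (deg b) \<subseteq> S'"
  shows "conv deg D f g b = (\<Sum>c\<in>S. \<Sum>d\<in>S'. D b c d * f c * g d)"
proof -
  have "conv deg D f g b = (\<Sum>c\<in>lowset deg (deg b). \<Sum>d\<in>S'. D b c d * f c * g d)"
    unfolding conv_def
  proof (rule sum.cong[OF refl])
    fix c
    show "(\<Sum>d\<in>lowset deg (deg b). D b c d * f c * g d) = (\<Sum>d\<in>S'. D b c d * f c * g d)"
      by (rule sum.mono_neutral_left) (use assms D_zero2[of b _ c] in auto)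
  qed
  also have "\<dots> = (\<Sum>c\<in>S. \<Sum>d\<in>S'. D b c d * f c * g d)"
  proof (rule sum.mono_neutral_left)
    show "\<forall>c\<in>S - lowset deg (deg b). (\<Sum>d\<in>S'. D b c d * f c * g d) = 0"
      using D_zero1[of b] by auto
  qed (use assms in auto)
  finally show ?thesis .
qed

lemma conv_Hset:
  assumes "f \<in> Hset" "g \<in> Hset"
  shows "conv deg D f g \<in> Hset"
proof (rule Hset_lowI[of _ "bd f + bd g"])
  fix b assume "conv deg D f g b \<noteq> 0"
  then obtain c d where "D b c d * f c * g d \<noteq> 0"
    unfolding conv_def by (meson sum.not_neutral_contains_not_neutral)
  then have "D b c d \<noteq> 0" "f c \<noteq> 0" "g d \<noteq> 0" by auto
  then show "deg b \<le> bd f + bd g"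
    using D_deg bd_ge[OF assms(1)] bd_ge[OF assms(2)] by fastforce
qed

lemma conv_add1: "conv deg D (f + f') g = conv deg D f g + conv deg D f' g"
  unfolding conv_def by (rule ext) (simp add: sum.distrib[symmetric] algebra_simps)
lemma conv_add2: "conv deg D g (f + f') = conv deg D g f + conv deg D g f'"
  unfolding conv_def by (rule ext) (simp add: sum.distrib[symmetric] algebra_simps)
lemma conv_scale1: "conv deg D (\<lambda>p. c * f p) g = (\<lambda>p. c * conv deg D f g p)"
  unfolding conv_def by (rule ext) (simp add: sum_distrib_left algebra_simps)
lemma conv_scale2: "conv deg D g (\<lambda>p. c * f p) = (\<lambda>p. c * conv deg D g f p)"
  unfolding conv_def by (rule ext) (simp add: sum_distrib_left algebra_simps)
lemma conv_zero1: "conv deg D 0 g = 0"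
  unfolding conv_def by (rule ext) simp
lemma conv_zero2: "conv deg D g 0 = 0"
  unfolding conv_def by (rule ext) simp

lemma conv_unitL: "conv deg D (unitv u) g = g"
proof
  fix b
  have "conv deg D (unitv u) g b = (\<Sum>d\<in>lowset deg (deg b). D b u d * g d)"
    unfolding conv_def
    by (subst sum_single[where a = u]) (auto simp: fin_lowset unitv_def)
  also have "\<dots> = g b"
    by (subst sum_single[where a = b]) (auto simp: fin_lowset D_u_d)
  finally show "conv deg D (unitv u) g b = g b" .
qed

lemma conv_unitR: "conv deg D g (unitv u) = g"
proof
  fix b
  have "conv deg D g (unitv u) b = (\<Sum>c\<in>lowset deg (deg b). D b c u * g c)"
    unfolding conv_def
    by (intro sum.cong refl, subst sum_single[where a = u]) (auto simp: fin_lowset unitv_def)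
  also have "\<dots> = g b"
    by (subst sum_single[where a = b]) (auto simp: fin_lowset D_c_u)
  finally show "conv deg D g (unitv u) b = g b" .
qed

lemma coassoc_low:
  assumes "p \<in> lowset deg (deg b)" "c \<in> lowset deg (deg b)" "d \<in> lowset deg (deg b)"
  shows "(\<Sum>e\<in>lowset deg (deg b). D b e d * D e p c) = (\<Sum>e\<in>lowset deg (deg b). D b p e * D e c d)"
proof -
  have "(\<Sum>e\<in>lowset deg (deg b). D b e d * D e p c) = (\<Sum>e\<in>dset deg (deg p + deg c). D b e d * D e p c)"
  proof (rule sum_eq_sup)
    fix e assume "e \<in> lowset deg (deg b)" "e \<notin> dset deg (deg p + deg c)"
    then show "D b e d * D e p c = 0" using D_deg[of e p c] by auto
  next
    fix e assume "e \<in> dset deg (deg p + deg c)" "e \<notin> lowset deg (deg b)"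
    then show "D b e d * D e p c = 0" using D_zero1[of b e d] by auto
  qed (auto simp: fin_lowset fin_dset)
  also have "\<dots> = (\<Sum>e\<in>dset deg (deg c + deg d). D b p e * D e c d)"
    by (rule D_coassoc)
  also have "\<dots> = (\<Sum>e\<in>lowset deg (deg b). D b p e * D e c d)"
  proof (rule sum_eq_sup)
    fix e assume "e \<in> dset deg (deg c + deg d)" "e \<notin> lowset deg (deg b)"
    then show "D b p e * D e c d = 0" using D_zero2[of b e p] by auto
  next
    fix e assume "e \<in> lowset deg (deg b)" "e \<notin> dset deg (deg c + deg d)"
    then show "D b p e * D e c d = 0" using D_deg[of e c d] by auto
  qed (auto simp: fin_lowset fin_dset)
  finally show ?thesis .
qed

lemma sum_perm4: "(\<Sum>e\<in>E. \<Sum>d\<in>Dd. \<Sum>p\<in>P. \<Sum>c\<in>C. F p c d e) = (\<Sum>p\<in>P. \<Sum>c\<in>C. \<Sum>d\<in>Dd. \<Sum>e\<in>E. F p c d e)"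
proof -
  have "(\<Sum>e\<in>E. \<Sum>d\<in>Dd. \<Sum>p\<in>P. \<Sum>c\<in>C. F p c d e) = (\<Sum>d\<in>Dd. \<Sum>e\<in>E. \<Sum>p\<in>P. \<Sum>c\<in>C. F p c d e)"
    by (rule sum.swap)
  also have "\<dots> = (\<Sum>d\<in>Dd. \<Sum>p\<in>P. \<Sum>e\<in>E. \<Sum>c\<in>C. F p c d e)"
    by (rule sum.cong[OF refl], rule sum.swap)
  also have "\<dots> = (\<Sum>d\<in>Dd. \<Sum>p\<in>P. \<Sum>c\<in>C. \<Sum>e\<in>E. F p c d e)"
    by (rule sum.cong[OF refl], rule sum.cong[OF refl], rule sum.swap)
  also have "\<dots> = (\<Sum>p\<in>P. \<Sum>d\<in>Dd. \<Sum>c\<in>C. \<Sum>e\<in>E. F p c d e)"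
    by (rule sum.swap)
  also have "\<dots> = (\<Sum>p\<in>P. \<Sum>c\<in>C. \<Sum>d\<in>Dd. \<Sum>e\<in>E. F p c d e)"
    by (rule sum.cong[OF refl], rule sum.swap)
  finally show ?thesis .
qed

lemma sum_perm3: "(\<Sum>e\<in>E. \<Sum>c\<in>C. \<Sum>d\<in>Dd. F c d e) = (\<Sum>c\<in>C. \<Sum>d\<in>Dd. \<Sum>e\<in>E. F c d e)"
proof -
  have "(\<Sum>e\<in>E. \<Sum>c\<in>C. \<Sum>d\<in>Dd. F c d e) = (\<Sum>c\<in>C. \<Sum>e\<in>E. \<Sum>d\<in>Dd. F c d e)"
    by (rule sum.swap)
  also have "\<dots> = (\<Sum>c\<in>C. \<Sum>d\<in>Dd. \<Sum>e\<in>E. F c d e)"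
    by (rule sum.cong[OF refl], rule sum.swap)
  finally show ?thesis .
qed

lemma conv_assoc: "conv deg D (conv deg D f g) k = conv deg D f (conv deg D g k)"
proof
  fix b
  let ?L = "lowset deg (deg b)"
  have fL: "finite ?L" by (rule fin_lowset)
  have 1: "conv deg D f g e = (\<Sum>p\<in>?L. \<Sum>c\<in>?L. D e p c * f p * g c)" if "e \<in> ?L" for e
    by (rule conv_eq) (use that fL in auto)
  have 2: "conv deg D g k e = (\<Sum>c\<in>?L. \<Sum>d\<in>?L. D e c d * g c * k d)" if "e \<in> ?L" for e
    by (rule conv_eq) (use that fL in auto)
  have "conv deg D (conv deg D f g) k b
      = (\<Sum>e\<in>?L. \<Sum>d\<in>?L. D b e d * conv deg D f g e * k d)"
    by (rule conv_eq) (use fL in auto)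
  also have "\<dots> = (\<Sum>e\<in>?L. \<Sum>d\<in>?L. \<Sum>p\<in>?L. \<Sum>c\<in>?L. (f p * g c * k d) * (D b e d * D e p c))"
    by (intro sum.cong refl) (simp add: 1 sum_distrib_left sum_distrib_right mult_ac)
  also have "\<dots> = (\<Sum>p\<in>?L. \<Sum>c\<in>?L. \<Sum>d\<in>?L. \<Sum>e\<in>?L. (f p * g c * k d) * (D b e d * D e p c))"
    by (rule sum_perm4)
  also have "\<dots> = (\<Sum>p\<in>?L. \<Sum>c\<in>?L. \<Sum>d\<in>?L. \<Sum>e\<in>?L. (f p * g c * k d) * (D b p e * D e c d))"
  proof (rule sum.cong[OF refl], rule sum.cong[OF refl], rule sum.cong[OF refl])
    fix p c d assume "p \<in> ?L" "c \<in> ?L" "d \<in> ?L"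
    then show "(\<Sum>e\<in>?L. (f p * g c * k d) * (D b e d * D e p c)) = (\<Sum>e\<in>?L. (f p * g c * k d) * (D b p e * D e c d))"
      by (simp add: sum_distrib_left[symmetric] coassoc_low)
  qed
  also have "\<dots> = (\<Sum>p\<in>?L. \<Sum>e\<in>?L. \<Sum>c\<in>?L. \<Sum>d\<in>?L. (f p * g c * k d) * (D b p e * D e c d))"
    by (rule sum.cong[OF refl], rule sum_perm3[symmetric])
  also have "\<dots> = (\<Sum>p\<in>?L. \<Sum>e\<in>?L. D b p e * f p * conv deg D g k e)"
    by (intro sum.cong refl) (simp add: 2 sum_distrib_left sum_distrib_right mult_ac)
  also have "\<dots> = conv deg D f (conv deg D g k) b"
    by (rule conv_eq[symmetric]) (use fL in auto)
  finally show "conv deg D (conv deg D f g) k b = conv deg D f (conv deg D g k) b" .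
qed

end

context gch begin

lemma subsp_conv_closed_Hset: "dual_ideal deg D Hset"
  unfolding dual_ideal_def using subsp_Hset conv_Hset by blast

lemma comp_add: "comp deg n ((x::'b\<Rightarrow>'k) + y) = comp deg n x + comp deg n y"
  by (rule ext) (simp add: comp_def)
lemma comp_scale: "comp deg n (\<lambda>p. (c::'k) * x p) = (\<lambda>p. c * comp deg n x p)"
  by (rule ext) (simp add: comp_def)
lemma comp_zero: "comp deg n 0 = (0::'b\<Rightarrow>'k)"
  by (rule ext) (simp add: comp_def)
lemma comp_diff: "comp deg n ((x::'b\<Rightarrow>'k) - y) = comp deg n x - comp deg n y"
  by (rule ext) (simp add: comp_def)
lemma comp_comp: "comp deg m (comp deg n (x::'b\<Rightarrow>'k)) = (if m = n then comp deg n x else 0)"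
  by (rule ext) (simp add: comp_def)

lemma comp_conv_pt:
  assumes "n' = deg b"
  shows "D b c d * f c * g d * (if deg b = n then 1 else 0)
     = (\<Sum>i\<in>{..n}. D b c d * comp deg i f c * comp deg (n - i) g d)"
proof (cases "D b c d = 0")
  case True then show ?thesis by simp
next
  case False
  then have dd: "deg c + deg d = deg b" by (rule D_deg)
  show ?thesis
  proof (cases "deg b = n")
    case True
    have "(\<Sum>i\<in>{..n}. D b c d * comp deg i f c * comp deg (n - i) g d)
        = D b c d * comp deg (deg c) f c * comp deg (n - deg c) g d"
      by (rule sum_single) (use True dd in \<open>auto simp: comp_def\<close>)
    moreover have "n - deg c = deg d" using True dd by simp
    ultimately show ?thesis using True by (simp add: comp_def)
  next
    case False
    have "(\<Sum>i\<in>{..n}. D b c d * comp deg i f c * comp deg (n - i) g d) = 0"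
      by (rule sum.neutral) (use False dd in \<open>auto simp: comp_def\<close>)
    then show ?thesis using False by simp
  qed
qed

lemma comp_conv: "comp deg n (conv deg D f g) = (\<Sum>i\<in>{..n}. conv deg D (comp deg i f) (comp deg (n - i) g))"
proof
  fix b
  let ?L = "lowset deg (deg b)"
  have "comp deg n (conv deg D f g) b = (\<Sum>c\<in>?L. \<Sum>d\<in>?L. D b c d * f c * g d * (if deg b = n then 1 else 0))"
    by (simp add: comp_def conv_def sum_distrib_right)
  also have "\<dots> = (\<Sum>c\<in>?L. \<Sum>d\<in>?L. \<Sum>i\<in>{..n}. D b c d * comp deg i f c * comp deg (n - i) g d)"
    by (intro sum.cong refl comp_conv_pt) simp
  also have "\<dots> = (\<Sum>i\<in>{..n}. \<Sum>c\<in>?L. \<Sum>d\<in>?L. D b c d * comp deg i f c * comp deg (n - i) g d)"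
    by (rule sum_perm3[symmetric])
  also have "\<dots> = (\<Sum>i\<in>{..n}. conv deg D (comp deg i f) (comp deg (n - i) g)) b"
    by (simp add: sum_fun_app conv_def)
  finally show "comp deg n (conv deg D f g) b = (\<Sum>i\<in>{..n}. conv deg D (comp deg i f) (comp deg (n - i) g)) b" .
qed

lemma conv_at_u: "conv deg D f g u = f u * g u"
proof -
  have "lowset deg (deg u) = {u}"
  proof (rule set_eqI)
    fix x show "x \<in> lowset deg (deg u) \<longleftrightarrow> x \<in> {u}" using deg0[of x] by simp
  qed
  then show ?thesis by (simp add: conv_def D_u)
qed

end

locale gchc = gch deg u M D eps A
  for deg :: "'b \<Rightarrow> nat" and u :: 'b and M D :: "'b \<Rightarrow> 'b \<Rightarrow> 'b \<Rightarrow> 'k::field"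
    and eps :: "'b \<Rightarrow> 'k" and A :: "'b \<Rightarrow> 'b \<Rightarrow> 'k" +
  fixes phi psi :: "'b \<Rightarrow> 'k"
  assumes cphi: "character deg u M phi" and cpsi: "character deg u M psi"
begin

definition chi :: "nat \<Rightarrow> 'b \<Rightarrow> 'k" where
  "chi n = comp deg n phi - comp deg n psi"

abbreviation II where "II \<equiv> Iset deg D phi psi"

lemma chi_Hset: "chi n \<in> Hset"
  unfolding chi_def by (rule subsp_diff[OF subsp_Hset comp_Hset comp_Hset])

lemma phi_u: "phi u = 1" using cphi by (simp add: character_def)
lemma psi_u: "psi u = 1" using cpsi by (simp add: character_def)
lemma phi_mult: "phi b * phi c = (\<Sum>e\<in>dset deg (deg b + deg c). M b c e * phi e)"
  using cphi by (simp add: character_def)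
lemma psi_mult: "psi b * psi c = (\<Sum>e\<in>dset deg (deg b + deg c). M b c e * psi e)"
  using cpsi by (simp add: character_def)

lemma I_memI: "(\<And>J. dual_ideal deg D J \<Longrightarrow> (\<forall>n. chi n \<in> J) \<Longrightarrow> f \<in> J) \<Longrightarrow> f \<in> II"
  unfolding Iset_def chi_def by blast

lemma I_memD: "f \<in> II \<Longrightarrow> dual_ideal deg D J \<Longrightarrow> (\<forall>n. chi n \<in> J) \<Longrightarrow> f \<in> J"
  unfolding Iset_def chi_def by blast

lemma I_min: "dual_ideal deg D J \<Longrightarrow> (\<And>n. chi n \<in> J) \<Longrightarrow> II \<subseteq> J"
  using I_memD by blast

lemma chi_I: "chi n \<in> II"
  by (rule I_memI) blast

lemma I_Hset: "II \<subseteq> Hset"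
  using I_min[OF subsp_conv_closed_Hset chi_Hset] by blast

lemma dual_ideal_subsp: "dual_ideal deg D J \<Longrightarrow> subsp J"
  by (simp add: dual_ideal_def)

lemma I_subsp: "subsp II"
  unfolding subsp_def
proof (intro conjI ballI allI impI)
  show "0 \<in> II" by (rule I_memI) (simp add: subsp_zero dual_ideal_subsp)
next
  fix x y assume "x \<in> II" "y \<in> II"
  then show "x + y \<in> II"
    by (intro I_memI) (simp add: subsp_add dual_ideal_subsp I_memD)
next
  fix c x assume "x \<in> II"
  then show "(\<lambda>p. c * x p) \<in> II"
    by (intro I_memI) (simp add: subsp_scale dual_ideal_subsp I_memD)
qed

lemma I_convL: "f \<in> II \<Longrightarrow> g \<in> Hset \<Longrightarrow> conv deg D f g \<in> II"
  by (intro I_memI) (simp add: dual_ideal_def I_memD)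
lemma I_convR: "f \<in> II \<Longrightarrow> g \<in> Hset \<Longrightarrow> conv deg D g f \<in> II"
  by (intro I_memI) (simp add: dual_ideal_def I_memD)

lemma I_ideal: "dual_ideal deg D II"
  unfolding dual_ideal_def using I_Hset I_subsp I_convL I_convR by blast

lemma comp_chi: "comp deg n (chi m) = (if n = m then chi m else 0)"
  unfolding chi_def by (simp add: comp_diff comp_comp)

lemma I_comp: "f \<in> II \<Longrightarrow> comp deg n f \<in> II"
proof -
  let ?J = "{f \<in> II. \<forall>n. comp deg n f \<in> II}"
  have "dual_ideal deg D ?J"
    unfolding dual_ideal_def
  proof (intro conjI ballI)
    show "?J \<subseteq> Hset" using I_Hset by blast
    show "subsp ?J" unfolding subsp_def
      using I_subsp by (auto simp: comp_add comp_scale comp_zero subsp_zero subsp_add subsp_scale)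
  next
    fix f g :: "'b \<Rightarrow> 'k" assume f: "f \<in> ?J" and g: "g \<in> Hset"
    have "comp deg n (conv deg D f g) \<in> II" for n
      unfolding comp_conv using f g by (intro subsp_sum[OF I_subsp] I_convL comp_Hset) auto
    moreover have "comp deg n (conv deg D g f) \<in> II" for n
      unfolding comp_conv using f g by (intro subsp_sum[OF I_subsp] I_convR comp_Hset) auto
    ultimately show "conv deg D f g \<in> ?J" "conv deg D g f \<in> ?J"
      using f g I_convL I_convR by auto
  qed
  moreover have "chi m \<in> ?J" for m
    using chi_I by (simp add: comp_chi subsp_zero[OF I_subsp])
  ultimately have "II \<subseteq> ?J" by (rule I_min)
  then show "f \<in> II \<Longrightarrow> comp deg n f \<in> II" by blast
qed

lemma I_u: "f \<in> II \<Longrightarrow> f u = 0"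
proof -
  let ?J = "{f \<in> Hset. f u = 0}"
  have "dual_ideal deg D ?J"
    unfolding dual_ideal_def subsp_def
    using subsp_Hset conv_Hset by (auto simp: conv_at_u subsp_def)
  moreover have "chi m \<in> ?J" for m
    using chi_Hset by (simp add: chi_def comp_def phi_u psi_u)
  ultimately have "II \<subseteq> ?J" by (rule I_min)
  then show "f \<in> II \<Longrightarrow> f u = 0" by blast
qed

end

lemma tens:
  fixes X :: "'b \<times> 'b \<Rightarrow> 'k::field"
  assumes "finite (supp X)" "subsp V" "subsp W"
    "\<And>q. (\<lambda>p. X (p, q)) \<in> V" "\<And>p. (\<lambda>q. X (p, q)) \<in> W"
  shows "X \<in> tspan V W"
  using assms
proof (induction "card (fst ` supp X)" arbitrary: X rule: less_induct)
  case less
  show ?case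
  proof (cases "supp X = {}")
    case True
    then have "X = 0" by (auto simp: supp_def fun_eq_iff)
    then show ?thesis unfolding tspan_def by (simp add: subsp_zero[OF subsp_lspan])
  next
    case False
    then obtain p0 q0 where pq: "X (p0, q0) \<noteq> 0" by (auto simp: supp_def)
    define v where "v = (\<lambda>p. X (p, q0))"
    define w where "w = (\<lambda>q. inverse (X (p0, q0)) * X (p0, q))"
    define X' where "X' = X - tprod v w"
    have v: "v \<in> V" unfolding v_def by (rule less.prems(4))
    have w: "w \<in> W" unfolding w_def by (rule subsp_scale[OF less.prems(3) less.prems(5)])
    have X'pt: "X' (p, q) = X (p, q) - X (p, q0) * (inverse (X (p0, q0)) * X (p0, q))" for p q
      by (simp add: X'_def tprod_def v_def w_def)
    have sX': "supp X' \<subseteq> fst ` supp X \<times> snd ` supp X"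
    proof
      fix z assume "z \<in> supp X'"
      obtain p q where z: "z = (p, q)" by fastforce
      have "X' (p, q) \<noteq> 0" using \<open>z \<in> supp X'\<close> z by (simp add: supp_def)
      then have "X (p, q) \<noteq> 0 \<or> (X (p, q0) \<noteq> 0 \<and> X (p0, q) \<noteq> 0)" by (auto simp: X'pt)
      then show "z \<in> fst ` supp X \<times> snd ` supp X"
        unfolding z supp_def by (auto intro: image_eqI[where x = "(p, q)"] image_eqI[where x = "(p, q0)"]
              image_eqI[where x = "(p0, q)"])
    qed
    have fin': "finite (supp X')"
      by (rule finite_subset[OF sX']) (use less.prems(1) in auto)
    have sub: "fst ` supp X' \<subseteq> fst ` supp X - {p0}"
    proof
      fix p assume "p \<in> fst ` supp X'"
      then obtain q where "X' (p, q) \<noteq> 0" by (auto simp: supp_def)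
      moreover have "X' (p0, q) = 0" using pq by (simp add: X'pt)
      ultimately have "p \<noteq> p0" by auto
      moreover have "p \<in> fst ` supp X" using sX' \<open>X' (p, q) \<noteq> 0\<close> by (force simp: supp_def)
      ultimately show "p \<in> fst ` supp X - {p0}" by simp
    qed
    have p0in: "p0 \<in> fst ` supp X" using pq by (force simp: supp_def)
    have "card (fst ` supp X') < card (fst ` supp X)"
    proof -
      have "card (fst ` supp X') \<le> card (fst ` supp X - {p0})"
        by (rule card_mono) (use less.prems(1) sub in auto)
      also have "\<dots> < card (fst ` supp X)"
        by (rule card_Diff1_less) (use p0in less.prems(1) in auto)
      finally show ?thesis .
    qed
    moreover have "(\<lambda>p. X' (p, q)) \<in> V" for q
    proof -
      have "(\<lambda>p. X' (p, q)) = (\<lambda>p. X (p, q)) - (\<lambda>p. (inverse (X (p0, q0)) * X (p0, q)) * v p)"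
        by (rule ext) (simp add: X'pt v_def mult_ac)
      then show ?thesis
        using subsp_diff[OF less.prems(2) less.prems(4) subsp_scale[OF less.prems(2) v]] by simp
    qed
    moreover have "(\<lambda>q. X' (p, q)) \<in> W" for p
    proof -
      have "(\<lambda>q. X' (p, q)) = (\<lambda>q. X (p, q)) - (\<lambda>q. X (p, q0) * w q)"
        by (rule ext) (simp add: X'pt w_def)
      then show ?thesis
        using subsp_diff[OF less.prems(3) less.prems(5) subsp_scale[OF less.prems(3) w]] by simp
    qed
    ultimately have "X' \<in> tspan V W" using less.hyps fin' less.prems(2,3) by blast
    moreover have "tprod v w \<in> tspan V W" unfolding tspan_def
      by (rule lspan_gen) (use v w in blast)
    ultimately have "X' + tprod v w \<in> tspan V W" unfolding tspan_def
      by (rule subsp_add[OF subsp_lspan])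
    then show ?thesis by (simp add: X'_def)
  qed
qed

lemma Hset_pairI: "finite A \<Longrightarrow> finite B \<Longrightarrow> supp X \<subseteq> A \<times> B \<Longrightarrow> X \<in> Hset"
  by (auto simp: Hset_def intro: finite_subset)

lemma pair_col:
  fixes X :: "'b \<times> 'b \<Rightarrow> 'k::field"
  assumes "X \<in> Hset"
  shows "pair (tprod f (unitv q)) X = pair f (\<lambda>p. X (p, q))"
proof -
  let ?S = "fst ` supp X" and ?T = "snd ` supp X"
  have fin: "finite ?S" "finite ?T" using assms by (auto simp: Hset_def)
  have s1: "supp X \<subseteq> ?S \<times> ?T" by force
  have s2: "supp (\<lambda>p. X (p, q)) \<subseteq> ?S" by (force simp: supp_def)
  have "pair (tprod f (unitv q)) X = (\<Sum>z\<in>?S \<times> ?T. tprod f (unitv q) z * X z)"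
    by (rule pair_superset) (use fin s1 in auto)
  also have "\<dots> = (\<Sum>p\<in>?S. \<Sum>q'\<in>?T. f p * (if q' = q then 1 else 0) * X (p, q'))"
    unfolding sum.cartesian_product by (rule sum.cong) (auto simp: tprod_def unitv_def)
  also have "\<dots> = (\<Sum>p\<in>?S. f p * X (p, q))"
  proof (rule sum.cong[OF refl])
    fix p
    show "(\<Sum>q'\<in>?T. f p * (if q' = q then 1 else 0) * X (p, q')) = f p * X (p, q)"
    proof (cases "q \<in> ?T")
      case True
      then show ?thesis by (subst sum_single[where a = q]) (use fin in auto)
    next
      case False
      then have "X (p, q) = 0" by (force simp: supp_def)
      then show ?thesis by (auto intro!: sum.neutral)
    qed
  qed
  also have "\<dots> = pair f (\<lambda>p. X (p, q))"
    by (rule pair_superset[symmetric]) (use fin s2 in auto)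
  finally show ?thesis .
qed

lemma pair_row:
  fixes X :: "'b \<times> 'b \<Rightarrow> 'k::field"
  assumes "X \<in> Hset"
  shows "pair (tprod (unitv p) g) X = pair g (\<lambda>q. X (p, q))"
proof -
  let ?S = "fst ` supp X" and ?T = "snd ` supp X"
  have fin: "finite ?S" "finite ?T" using assms by (auto simp: Hset_def)
  have s1: "supp X \<subseteq> ?S \<times> ?T" by force
  have s2: "supp (\<lambda>q. X (p, q)) \<subseteq> ?T" by (force simp: supp_def)
  have "pair (tprod (unitv p) g) X = (\<Sum>z\<in>?S \<times> ?T. tprod (unitv p) g z * X z)"
    by (rule pair_superset) (use fin s1 in auto)
  also have "\<dots> = (\<Sum>p'\<in>?S. \<Sum>q'\<in>?T. (if p' = p then 1 else 0) * g q' * X (p', q'))"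
    unfolding sum.cartesian_product by (rule sum.cong) (auto simp: tprod_def unitv_def)
  also have "\<dots> = (\<Sum>q'\<in>?T. \<Sum>p'\<in>?S. (if p' = p then 1 else 0) * g q' * X (p', q'))"
    by (rule sum.swap)
  also have "\<dots> = (\<Sum>q'\<in>?T. g q' * X (p, q'))"
  proof (rule sum.cong[OF refl])
    fix q
    show "(\<Sum>p'\<in>?S. (if p' = p then 1 else 0) * g q * X (p', q)) = g q * X (p, q)"
    proof (cases "p \<in> ?S")
      case True
      then show ?thesis by (subst sum_single[where a = p]) (use fin in auto)
    next
      case False
      then have "X (p, q) = 0" by (force simp: supp_def)
      then show ?thesis by (auto intro!: sum.neutral)
    qed
  qed
  also have "\<dots> = pair g (\<lambda>q. X (p, q))"
    by (rule pair_superset[symmetric]) (use fin s2 in auto)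
  finally show ?thesis .
qed

lemma col_Hset: "X \<in> Hset \<Longrightarrow> (\<lambda>p. X (p, q)) \<in> Hset"
proof -
  assume "X \<in> Hset"
  then have "finite (fst ` supp X)" by (simp add: Hset_def)
  moreover have "supp (\<lambda>p. X (p, q)) \<subseteq> fst ` supp X" by (force simp: supp_def)
  ultimately show ?thesis by (auto simp: Hset_def intro: finite_subset)
qed

lemma row_Hset: "X \<in> Hset \<Longrightarrow> (\<lambda>q. X (p, q)) \<in> Hset"
proof -
  assume "X \<in> Hset"
  then have "finite (snd ` supp X)" by (simp add: Hset_def)
  moreover have "supp (\<lambda>q. X (p, q)) \<subseteq> snd ` supp X" by (force simp: supp_def)
  ultimately show ?thesis by (auto simp: Hset_def intro: finite_subset)
qed

lemma zero_Hset[simp]: "0 \<in> Hset"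
  by (simp add: Hset_def supp_def)

context gch begin

lemma hcomult_pt: "hcomult D h (p, q) = (\<Sum>b\<in>supp h. h b * D b p q)"
  by (simp add: hcomult_def)

lemma hcomult_supp:
  assumes "h \<in> Hset"
  shows "supp (hcomult D h) \<subseteq> lowset deg (bd h) \<times> lowset deg (bd h)"
proof
  fix z assume z: "z \<in> supp (hcomult D h)"
  obtain p q where zz: "z = (p, q)" by fastforce
  from z zz have "(\<Sum>b\<in>supp h. h b * D b p q) \<noteq> 0" by (simp add: supp_def hcomult_pt)
  then obtain b where "b \<in> supp h" "h b * D b p q \<noteq> 0"
    by (meson sum.not_neutral_contains_not_neutral)
  then have "h b \<noteq> 0" "D b p q \<noteq> 0" by auto
  then show "z \<in> lowset deg (bd h) \<times> lowset deg (bd h)"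
    using zz D_low1 D_low2 bd_ge[OF assms] by fastforce
qed

lemma hcomult_Hset: "h \<in> Hset \<Longrightarrow> hcomult D h \<in> Hset"
  by (rule Hset_pairI[OF fin_lowset fin_lowset hcomult_supp])

lemma pair_conv:
  assumes h: "h \<in> Hset"
  shows "pair (conv deg D f g) h = pair (tprod f g) (hcomult D h)"
proof -
  let ?L = "lowset deg (bd h)"
  have fL: "finite ?L" by (rule fin_lowset)
  have fs: "finite (supp h)" using h by (simp add: Hset_def)
  have "pair (conv deg D f g) h = (\<Sum>b\<in>supp h. (\<Sum>c\<in>?L. \<Sum>d\<in>?L. D b c d * f c * g d) * h b)"
    unfolding pair_def
  proof (rule sum.cong[OF refl])
    fix b assume "b \<in> supp h"
    then have "deg b \<le> bd h" using bd_ge[OF h] by (simp add: supp_def)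
    then have "conv deg D f g b = (\<Sum>c\<in>?L. \<Sum>d\<in>?L. D b c d * f c * g d)"
      by (intro conv_eq fL) auto
    then show "conv deg D f g b * h b = (\<Sum>c\<in>?L. \<Sum>d\<in>?L. D b c d * f c * g d) * h b" by simp
  qed
  also have "\<dots> = (\<Sum>b\<in>supp h. \<Sum>c\<in>?L. \<Sum>d\<in>?L. f c * g d * (h b * D b c d))"
    by (simp add: sum_distrib_right sum_distrib_left mult_ac)
  also have "\<dots> = (\<Sum>c\<in>?L. \<Sum>d\<in>?L. \<Sum>b\<in>supp h. f c * g d * (h b * D b c d))"
    by (rule sum_perm3)
  also have "\<dots> = (\<Sum>c\<in>?L. \<Sum>d\<in>?L. tprod f g (c, d) * hcomult D h (c, d))"
    by (simp add: hcomult_pt tprod_def sum_distrib_left)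
  also have "\<dots> = (\<Sum>z\<in>?L \<times> ?L. tprod f g z * hcomult D h z)"
    unfolding sum.cartesian_product by (rule sum.cong) auto
  also have "\<dots> = pair (tprod f g) (hcomult D h)"
    by (rule pair_superset[symmetric]) (use fL hcomult_supp[OF h] in auto)
  finally show ?thesis .
qed

lemma pair_comp:
  assumes "h \<in> Hset"
  shows "pair (comp deg n f) h = pair f (comp deg n h)"
proof -
  have "supp (comp deg n h) \<subseteq> supp h" by (auto simp: supp_def comp_def)
  then have "pair f (comp deg n h) = (\<Sum>b\<in>supp h. f b * comp deg n h b)"
    by (rule pair_superset[rotated]) (use assms in \<open>simp add: Hset_def\<close>)
  also have "\<dots> = (\<Sum>b\<in>supp h. comp deg n f b * h b)"
    by (rule sum.cong) (auto simp: comp_def)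
  finally show ?thesis by (simp add: pair_def)
qed

lemma pair_diff1: "pair (f - g) h = pair f h - pair g h"
  by (simp add: pair_def sum_subtractf algebra_simps)

lemma pair_sum1: "pair (sum F N) h = (\<Sum>n\<in>N. pair (F n) h)"
proof (induction N rule: infinite_finite_induct)
  case (insert x N)
  then show ?case by (simp only: sum.insert[OF insert(1,2)] pair_add1 insert(3))
qed (simp_all add: pair_def)

lemma pair_cong1: "(\<And>b. b \<in> supp h \<Longrightarrow> f b = g b) \<Longrightarrow> pair f h = pair g h"
  unfolding pair_def by (rule sum.cong) auto

end

context gchc begin

definition TT where "TT = {h \<in> Hset. \<forall>f\<in>II. pair f h = 0}"

lemma TT_Hset: "TT \<subseteq> Hset" by (auto simp: TT_def)

lemma TT_subsp: "subsp TT"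
  unfolding subsp_def TT_def
  by (auto simp: subsp_zero[OF subsp_Hset] subsp_add[OF subsp_Hset] subsp_scale[OF subsp_Hset]
      pair_zero2 pair_add2 pair_scale2)

lemma TT_graded: "graded_subsp deg TT"
  unfolding graded_subsp_def TT_def
  using I_comp by (auto simp: comp_Hset pair_comp[symmetric])

lemma TT_coalg: "h \<in> TT \<Longrightarrow> hcomult D h \<in> tspan TT TT"
proof -
  assume hT: "h \<in> TT"
  then have h: "h \<in> Hset" by (simp add: TT_def)
  have X: "hcomult D h \<in> Hset" by (rule hcomult_Hset[OF h])
  show ?thesis
  proof (rule tens)
    show "finite (supp (hcomult D h))" using X by (simp add: Hset_def)
    show "subsp TT" "subsp TT" by (rule TT_subsp)+
  next
    fix q
    show "(\<lambda>p. hcomult D h (p, q)) \<in> TT" unfolding TT_def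
    proof (intro CollectI conjI ballI)
      show "(\<lambda>p. hcomult D h (p, q)) \<in> Hset" by (rule col_Hset[OF X])
      fix f assume f: "f \<in> II"
      have "pair f (\<lambda>p. hcomult D h (p, q)) = pair (conv deg D f (unitv q)) h"
        by (simp add: pair_col[OF X, symmetric] pair_conv[OF h])
      also have "\<dots> = 0" using hT I_convL[OF f unitv_Hset] by (simp add: TT_def)
      finally show "pair f (\<lambda>p. hcomult D h (p, q)) = 0" .
    qed
  next
    fix p
    show "(\<lambda>q. hcomult D h (p, q)) \<in> TT" unfolding TT_def
    proof (intro CollectI conjI ballI)
      show "(\<lambda>q. hcomult D h (p, q)) \<in> Hset" by (rule row_Hset[OF X])
      fix f assume f: "f \<in> II"
      have "pair f (\<lambda>q. hcomult D h (p, q)) = pair (conv deg D (unitv p) f) h"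
        by (simp add: pair_row[OF X, symmetric] pair_conv[OF h])
      also have "\<dots> = 0" using hT I_convR[OF f unitv_Hset] by (simp add: TT_def)
      finally show "pair f (\<lambda>q. hcomult D h (p, q)) = 0" .
    qed
  qed
qed

lemma TT_subcoalg: "graded_subcoalg deg D TT"
  unfolding graded_subcoalg_def using TT_Hset TT_subsp TT_graded TT_coalg by blast

lemma TT_agree: "h \<in> TT \<Longrightarrow> pair phi h = pair psi h"
proof -
  assume hT: "h \<in> TT"
  then have h: "h \<in> Hset" by (simp add: TT_def)
  have "pair (phi - psi) h = pair (\<Sum>n\<in>{..bd h}. chi n) h"
  proof (rule pair_cong1)
    fix b assume "b \<in> supp h"
    then have "deg b \<le> bd h" using bd_ge[OF h] by (simp add: supp_def)
    have "(\<Sum>n\<in>{..bd h}. chi n) b = (\<Sum>n\<in>{..bd h}. if n = deg b then phi b - psi b else 0)"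
      unfolding sum_fun_app by (rule sum.cong) (auto simp: chi_def comp_def)
    also have "\<dots> = phi b - psi b" using \<open>deg b \<le> bd h\<close> by simp
    finally show "(phi - psi) b = (\<Sum>n\<in>{..bd h}. chi n) b" by simp
  qed
  also have "\<dots> = 0" unfolding pair_sum1 using hT chi_I by (simp add: TT_def)
  finally show ?thesis by (simp add: pair_diff1)
qed

lemma pair_tspan_zero:
  assumes "Y \<in> tspan C C'" "C \<subseteq> Hset" "C' \<subseteq> Hset"
    "\<And>x y. x \<in> C \<Longrightarrow> y \<in> C' \<Longrightarrow> pair f x * pair g y = 0"
  shows "pair (tprod f g) Y = 0"
proof -
  have "Y \<in> Hset \<and> pair (tprod f g) Y = 0"
    using assms(1) unfolding tspan_def
  proof (rule lspan_induct)
    show "0 \<in> Hset \<and> pair (tprod f g) 0 = 0" by (simp add: subsp_zero[OF subsp_Hset] pair_zero2)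
  next
    fix z c assume "z \<in> {tprod x y |x y. x \<in> C \<and> y \<in> C'}"
    then obtain x y where z: "z = tprod x y" "x \<in> C" "y \<in> C'" by blast
    then have "z \<in> Hset" using assms(2,3) tprod_Hset by blast
    then show "(\<lambda>p. c * z p) \<in> Hset \<and> pair (tprod f g) (\<lambda>p. c * z p) = 0"
      using z assms(4) by (simp add: subsp_scale[OF subsp_Hset] pair_scale2 pair_tprod)
  next
    fix a b assume "a \<in> Hset \<and> pair (tprod f g) a = 0" "b \<in> Hset \<and> pair (tprod f g) b = 0"
    then show "a + b \<in> Hset \<and> pair (tprod f g) (a + b) = 0"
      by (simp add: subsp_add[OF subsp_Hset] pair_add2)
  qed
  then show ?thesis by simp
qed

lemma TT_max:
  assumes C: "graded_subcoalg deg D C" and ag: "\<forall>h\<in>C. pair phi h = pair psi h"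
  shows "C \<subseteq> TT"
proof -
  have CH: "C \<subseteq> Hset" and Cs: "subsp C" and Cg: "graded_subsp deg C"
    and Cc: "\<And>x. x \<in> C \<Longrightarrow> hcomult D x \<in> tspan C C"
    using C by (auto simp: graded_subcoalg_def)
  let ?J = "{f \<in> Hset. \<forall>h\<in>C. pair f h = 0}"
  have "dual_ideal deg D ?J"
    unfolding dual_ideal_def
  proof (intro conjI ballI)
    show "?J \<subseteq> Hset" by blast
    show "subsp ?J" unfolding subsp_def
      by (auto simp: subsp_zero[OF subsp_Hset] subsp_add[OF subsp_Hset] subsp_scale[OF subsp_Hset]
          pair_zero1 pair_add1 pair_scale1)
  next
    fix f g :: "'b \<Rightarrow> 'k" assume f: "f \<in> ?J" and g: "g \<in> Hset"
    have "pair (conv deg D f g) h = 0" if "h \<in> C" for h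
      unfolding pair_conv[OF subsetD[OF CH that]]
      by (rule pair_tspan_zero[OF Cc[OF that] CH CH]) (use f in auto)
    then show "conv deg D f g \<in> ?J" using f g conv_Hset by blast
    have "pair (conv deg D g f) h = 0" if "h \<in> C" for h
      unfolding pair_conv[OF subsetD[OF CH that]]
      by (rule pair_tspan_zero[OF Cc[OF that] CH CH]) (use f in auto)
    then show "conv deg D g f \<in> ?J" using f g conv_Hset by blast
  qed
  moreover have "chi n \<in> ?J" for n
  proof -
    have "pair (chi n) h = 0" if "h \<in> C" for h
    proof -
      have hc: "comp deg n h \<in> C" using Cg that by (simp add: graded_subsp_def)
      have "h \<in> Hset" using CH that by blast
      then show ?thesis using ag hc by (simp add: chi_def pair_diff1 pair_comp)
    qed
    then show ?thesis using chi_Hset by blast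
  qed
  ultimately have "II \<subseteq> ?J" by (rule I_min)
  then show ?thesis using CH unfolding TT_def by blast
qed

lemma Sset_eq: "Sset deg D phi psi = TT"
  unfolding Sset_def
proof (rule Greatest_equality)
  show "graded_subcoalg deg D TT \<and> (\<forall>h\<in>TT. pair phi h = pair psi h)"
    using TT_subcoalg TT_agree by blast
next
  fix C assume "graded_subcoalg deg D C \<and> (\<forall>h\<in>C. pair phi h = pair psi h)"
  then show "C \<le> TT" using TT_max by blast
qed

end

lemma sum_prod2: "(K::'a::comm_semiring_1) * sum A P * sum B Q = (\<Sum>p\<in>P. \<Sum>q\<in>Q. K * A p * B q)"
proof -
  have "K * sum A P * sum B Q = K * (\<Sum>p\<in>P. \<Sum>q\<in>Q. A p * B q)"
    by (simp add: sum_product mult.assoc)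
  also have "\<dots> = (\<Sum>p\<in>P. \<Sum>q\<in>Q. K * A p * B q)"
    by (simp add: sum_distrib_left mult.assoc)
  finally show ?thesis .
qed

context gch begin

definition star :: "('b \<times> 'b \<Rightarrow> 'k) \<Rightarrow> ('b \<times> 'b \<Rightarrow> 'k) \<Rightarrow> ('b \<times> 'b \<Rightarrow> 'k)" where
  "star X Y = (\<lambda>(b, c). \<Sum>b1\<in>lowset deg (deg b). \<Sum>b2\<in>lowset deg (deg b).
      \<Sum>c1\<in>lowset deg (deg c). \<Sum>c2\<in>lowset deg (deg c).
        D b b1 b2 * D c c1 c2 * X (b1, c1) * Y (b2, c2))"

lemma star_pt: "star X Y (b, c) = (\<Sum>b1\<in>lowset deg (deg b). \<Sum>b2\<in>lowset deg (deg b).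
      \<Sum>c1\<in>lowset deg (deg c). \<Sum>c2\<in>lowset deg (deg c).
        D b b1 b2 * D c c1 c2 * X (b1, c1) * Y (b2, c2))"
  by (simp add: star_def)

lemma star_tprod: "star (tprod a b) (tprod a' b') = tprod (conv deg D a a') (conv deg D b b')"
proof (rule ext, clarify)
  fix x y
  let ?Lx = "lowset deg (deg x)" and ?Ly = "lowset deg (deg y)"
  have "tprod (conv deg D a a') (conv deg D b b') (x, y) = (\<Sum>b1\<in>?Lx. \<Sum>b2\<in>?Lx. D x b1 b2 * a b1 * a' b2) * (\<Sum>c1\<in>?Ly. \<Sum>c2\<in>?Ly. D y c1 c2 * b c1 * b' c2)"
    by (simp add: tprod_def conv_def)
  also have "\<dots> = (\<Sum>b1\<in>?Lx. \<Sum>b2\<in>?Lx. (D x b1 b2 * a b1 * a' b2) * (\<Sum>c1\<in>?Ly. \<Sum>c2\<in>?Ly. D y c1 c2 * b c1 * b' c2))"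
    by (simp only: sum_distrib_right)
  also have "\<dots> = (\<Sum>b1\<in>?Lx. \<Sum>b2\<in>?Lx. \<Sum>c1\<in>?Ly. \<Sum>c2\<in>?Ly. (D x b1 b2 * a b1 * a' b2) * (D y c1 c2 * b c1 * b' c2))"
    by (simp only: sum_distrib_left)
  also have "\<dots> = star (tprod a b) (tprod a' b') (x, y)"
    unfolding star_pt tprod_def by (intro sum.cong refl) (simp add: mult_ac)
  finally show "star (tprod a b) (tprod a' b') (x, y) = tprod (conv deg D a a') (conv deg D b b') (x, y)" ..
qed

lemma star_add1: "star (X + X') Y = star X Y + star X' Y"
  by (rule ext, clarify) (simp add: star_pt sum.distrib[symmetric] algebra_simps)
lemma star_add2: "star Y (X + X') = star Y X + star Y X'"
  by (rule ext, clarify) (simp add: star_pt sum.distrib[symmetric] algebra_simps)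
lemma star_scale1: "star (\<lambda>p. c * X p) Y = (\<lambda>p. c * star X Y p)"
  by (rule ext, clarify) (simp add: star_pt sum_distrib_left algebra_simps)
lemma star_scale2: "star Y (\<lambda>p. c * X p) = (\<lambda>p. c * star Y X p)"
  by (rule ext, clarify) (simp add: star_pt sum_distrib_left algebra_simps)
lemma star_zero1: "star 0 Y = 0"
  by (rule ext, clarify) (simp add: star_pt)
lemma star_zero2: "star Y 0 = 0"
  by (rule ext, clarify) (simp add: star_pt)

lemma dual_comult_pt: "dual_comult deg M f (b, c) = (\<Sum>e\<in>dset deg (deg b + deg c). M b c e * f e)"
  by (simp add: dual_comult_def)

lemma dual_comult_add: "dual_comult deg M (f + g) = dual_comult deg M f + dual_comult deg M g"
  by (rule ext, clarify) (simp add: dual_comult_pt sum.distrib[symmetric] algebra_simps)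
lemma dual_comult_scale: "dual_comult deg M (\<lambda>p. c * f p) = (\<lambda>p. c * dual_comult deg M f p)"
  by (rule ext, clarify) (simp add: dual_comult_pt sum_distrib_left algebra_simps)
lemma dual_comult_zero: "dual_comult deg M 0 = 0"
  by (rule ext, clarify) (simp add: dual_comult_pt)

lemma dual_comult_Hset:
  assumes f: "f \<in> Hset"
  shows "dual_comult deg M f \<in> Hset"
proof (rule Hset_pairI[OF fin_lowset fin_lowset])
  show "supp (dual_comult deg M f) \<subseteq> lowset deg (bd f) \<times> lowset deg (bd f)"
  proof
    fix z assume z: "z \<in> supp (dual_comult deg M f)"
    obtain b c where zz: "z = (b, c)" by fastforce
    from z zz have "(\<Sum>e\<in>dset deg (deg b + deg c). M b c e * f e) \<noteq> 0"
      by (simp add: supp_def dual_comult_pt)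
    then obtain e where "e \<in> dset deg (deg b + deg c)" "M b c e * f e \<noteq> 0"
      by (meson sum.not_neutral_contains_not_neutral)
    then have "deg e = deg b + deg c" "f e \<noteq> 0" by auto
    then show "z \<in> lowset deg (bd f) \<times> lowset deg (bd f)"
      using zz bd_ge[OF f] by fastforce
  qed
qed

lemma Hset_tspan:
  fixes X :: "'b \<times> 'b \<Rightarrow> 'k"
  assumes "X \<in> Hset"
  shows "X \<in> tspan Hset Hset"
proof -
  have fin: "finite (supp X)" using assms by (simp add: Hset_def)
  have "X = (\<Sum>z\<in>supp X. (\<lambda>w. X z * tprod (unitv (fst z)) (unitv (snd z)) w))"
  proof
    fix w
    have "(\<Sum>z\<in>supp X. (\<lambda>w. X z * tprod (unitv (fst z)) (unitv (snd z)) w)) w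
        = (\<Sum>z\<in>supp X. if z = w then X z else 0)"
      unfolding sum_fun_app
      by (rule sum.cong) (auto simp: tprod_def unitv_def split: prod.splits)
    also have "\<dots> = X w" using fin by (simp add: supp_def)
    finally show "X w = (\<Sum>z\<in>supp X. (\<lambda>w. X z * tprod (unitv (fst z)) (unitv (snd z)) w)) w" by simp
  qed
  also have "\<dots> \<in> tspan Hset Hset" unfolding tspan_def
    by (intro subsp_sum[OF subsp_lspan] subsp_scale[OF subsp_lspan] lspan_gen)
      (auto intro: unitv_Hset)
  finally show ?thesis .
qed

lemma dual_comult_conv:
  "dual_comult deg M (conv deg D f g) = star (dual_comult deg M f) (dual_comult deg M g)"
proof (rule ext, clarify)
  fix x y
  let ?N = "deg x + deg y"
  let ?LN = "lowset deg ?N" and ?Lx = "lowset deg (deg x)" and ?Ly = "lowset deg (deg y)"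
  have fin: "finite ?LN" "finite ?Lx" "finite ?Ly" by (rule fin_lowset)+
  have "dual_comult deg M (conv deg D f g) (x, y)
      = (\<Sum>e\<in>dset deg ?N. M x y e * (\<Sum>p\<in>?LN. \<Sum>q\<in>?LN. D e p q * f p * g q))"
    unfolding dual_comult_pt
    by (rule sum.cong[OF refl]) (subst conv_eq[OF fin(1) fin(1)], auto)
  also have "\<dots> = (\<Sum>p\<in>?LN. \<Sum>q\<in>?LN. \<Sum>e\<in>dset deg ?N. f p * g q * (M x y e * D e p q))"
    unfolding sum_distrib_left by (subst sum_perm3[symmetric]) (simp add: mult_ac)
  also have "\<dots> = (\<Sum>p\<in>?LN. \<Sum>q\<in>?LN. f p * g q * (\<Sum>e\<in>dset deg ?N. M x y e * D e p q))"
    by (simp add: sum_distrib_left)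
  also have "\<dots> = (\<Sum>p\<in>?LN. \<Sum>q\<in>?LN. f p * g q * (\<Sum>b1\<in>?Lx. \<Sum>b2\<in>?Lx. \<Sum>c1\<in>?Ly. \<Sum>c2\<in>?Ly.
             D x b1 b2 * D y c1 c2 * M b1 c1 p * M b2 c2 q))"
    by (simp only: compat)
  also have "\<dots> = (\<Sum>p\<in>?LN. \<Sum>q\<in>?LN. \<Sum>b1\<in>?Lx. \<Sum>b2\<in>?Lx. \<Sum>c1\<in>?Ly. \<Sum>c2\<in>?Ly.
             D x b1 b2 * D y c1 c2 * (M b1 c1 p * f p) * (M b2 c2 q * g q))"
    by (simp add: sum_distrib_left mult_ac)
  also have "\<dots> = (\<Sum>b1\<in>?Lx. \<Sum>p\<in>?LN. \<Sum>q\<in>?LN. \<Sum>b2\<in>?Lx. \<Sum>c1\<in>?Ly. \<Sum>c2\<in>?Ly.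
             D x b1 b2 * D y c1 c2 * (M b1 c1 p * f p) * (M b2 c2 q * g q))"
    by (rule sum_perm3[symmetric])
  also have "\<dots> = (\<Sum>b1\<in>?Lx. \<Sum>b2\<in>?Lx. \<Sum>p\<in>?LN. \<Sum>q\<in>?LN. \<Sum>c1\<in>?Ly. \<Sum>c2\<in>?Ly.
             D x b1 b2 * D y c1 c2 * (M b1 c1 p * f p) * (M b2 c2 q * g q))"
    by (rule sum.cong[OF refl], rule sum_perm3[symmetric])
  also have "\<dots> = (\<Sum>b1\<in>?Lx. \<Sum>b2\<in>?Lx. \<Sum>c1\<in>?Ly. \<Sum>p\<in>?LN. \<Sum>q\<in>?LN. \<Sum>c2\<in>?Ly.
             D x b1 b2 * D y c1 c2 * (M b1 c1 p * f p) * (M b2 c2 q * g q))"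
    by (rule sum.cong[OF refl], rule sum.cong[OF refl], rule sum_perm3[symmetric])
  also have "\<dots> = (\<Sum>b1\<in>?Lx. \<Sum>b2\<in>?Lx. \<Sum>c1\<in>?Ly. \<Sum>c2\<in>?Ly. \<Sum>p\<in>?LN. \<Sum>q\<in>?LN.
             D x b1 b2 * D y c1 c2 * (M b1 c1 p * f p) * (M b2 c2 q * g q))"
    by (rule sum.cong[OF refl], rule sum.cong[OF refl], rule sum.cong[OF refl], rule sum_perm3[symmetric])
  also have "\<dots> = (\<Sum>b1\<in>?Lx. \<Sum>b2\<in>?Lx. \<Sum>c1\<in>?Ly. \<Sum>c2\<in>?Ly.
             D x b1 b2 * D y c1 c2 * (\<Sum>p\<in>?LN. M b1 c1 p * f p) * (\<Sum>q\<in>?LN. M b2 c2 q * g q))"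
    by (rule sum.cong[OF refl], rule sum.cong[OF refl], rule sum.cong[OF refl], rule sum.cong[OF refl])
      (rule sum_prod2[symmetric])
  also have "\<dots> = (\<Sum>b1\<in>?Lx. \<Sum>b2\<in>?Lx. \<Sum>c1\<in>?Ly. \<Sum>c2\<in>?Ly.
             D x b1 b2 * D y c1 c2 * dual_comult deg M f (b1, c1) * dual_comult deg M g (b2, c2))"
  proof (rule sum.cong[OF refl], rule sum.cong[OF refl], rule sum.cong[OF refl], rule sum.cong[OF refl])
    fix b1 b2 c1 c2 assume "b1 \<in> ?Lx" "b2 \<in> ?Lx" "c1 \<in> ?Ly" "c2 \<in> ?Ly"
    then have le: "deg b1 + deg c1 \<le> ?N" "deg b2 + deg c2 \<le> ?N" by auto
    have "(\<Sum>p\<in>?LN. M b1 c1 p * f p) = dual_comult deg M f (b1, c1)"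
      unfolding dual_comult_pt
      by (rule sum_eq_sup) (use le M_deg fin_dset fin in auto)
    moreover have "(\<Sum>q\<in>?LN. M b2 c2 q * g q) = dual_comult deg M g (b2, c2)"
      unfolding dual_comult_pt
      by (rule sum_eq_sup) (use le M_deg fin_dset fin in auto)
    ultimately show "D x b1 b2 * D y c1 c2 * (\<Sum>p\<in>?LN. M b1 c1 p * f p) * (\<Sum>q\<in>?LN. M b2 c2 q * g q)
      = D x b1 b2 * D y c1 c2 * dual_comult deg M f (b1, c1) * dual_comult deg M g (b2, c2)" by simp
  qed
  also have "\<dots> = star (dual_comult deg M f) (dual_comult deg M g) (x, y)"
    by (simp add: star_pt)
  finally show "dual_comult deg M (conv deg D f g) (x, y) = star (dual_comult deg M f) (dual_comult deg M g) (x, y)" .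
qed

end

context gchc begin

definition LL where
  "LL = lspan ({tprod x y | x y. x \<in> II \<and> y \<in> Hset} \<union> {tprod x y | x y. x \<in> Hset \<and> y \<in> II})"

lemma LL_subsp: "subsp LL" unfolding LL_def by (rule subsp_lspan)

lemma LL_gen1: "x \<in> II \<Longrightarrow> y \<in> Hset \<Longrightarrow> tprod x y \<in> LL"
  unfolding LL_def by (rule lspan_gen) blast
lemma LL_gen2: "x \<in> Hset \<Longrightarrow> y \<in> II \<Longrightarrow> tprod x y \<in> LL"
  unfolding LL_def by (rule lspan_gen) blast

lemma star_gen:
  assumes X: "X \<in> LL" and a: "a \<in> Hset" and b: "b \<in> Hset"
  shows "star X (tprod a b) \<in> LL \<and> star (tprod a b) X \<in> LL"
  using X unfolding LL_def
proof (rule lspan_induct)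
  show "star 0 (tprod a b) \<in> lspan ({tprod x y | x y. x \<in> II \<and> y \<in> Hset} \<union> {tprod x y | x y. x \<in> Hset \<and> y \<in> II}) \<and>
        star (tprod a b) 0 \<in> lspan ({tprod x y | x y. x \<in> II \<and> y \<in> Hset} \<union> {tprod x y | x y. x \<in> Hset \<and> y \<in> II})"
    by (simp add: star_zero1 star_zero2 subsp_zero[OF subsp_lspan])
next
  fix z :: "'b \<times> 'b \<Rightarrow> 'k" and c :: 'k
  assume "z \<in> {tprod x y | x y. x \<in> II \<and> y \<in> Hset} \<union> {tprod x y | x y. x \<in> Hset \<and> y \<in> II}"
  then obtain x y where z: "z = tprod x y" and xy: "(x \<in> II \<and> y \<in> Hset) \<or> (x \<in> Hset \<and> y \<in> II)" by blast
  have xH: "x \<in> Hset" and yH: "y \<in> Hset" using xy I_Hset by auto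
  have 1: "tprod (conv deg D x a) (conv deg D y b) \<in> LL"
    using xy a b xH yH by (auto intro: LL_gen1 LL_gen2 I_convL I_convR conv_Hset)
  have 2: "tprod (conv deg D a x) (conv deg D b y) \<in> LL"
    using xy a b xH yH by (auto intro: LL_gen1 LL_gen2 I_convL I_convR conv_Hset)
  show "star (\<lambda>p. c * z p) (tprod a b) \<in> lspan ({tprod x y | x y. x \<in> II \<and> y \<in> Hset} \<union> {tprod x y | x y. x \<in> Hset \<and> y \<in> II}) \<and>
        star (tprod a b) (\<lambda>p. c * z p) \<in> lspan ({tprod x y | x y. x \<in> II \<and> y \<in> Hset} \<union> {tprod x y | x y. x \<in> Hset \<and> y \<in> II})"
    using subsp_scale[OF LL_subsp 1, of c] subsp_scale[OF LL_subsp 2, of c]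
    unfolding LL_def z by (simp add: star_scale1 star_scale2 star_tprod)
next
  fix X1 X2 :: "'b \<times> 'b \<Rightarrow> 'k"
  assume "star X1 (tprod a b) \<in> lspan ({tprod x y | x y. x \<in> II \<and> y \<in> Hset} \<union> {tprod x y | x y. x \<in> Hset \<and> y \<in> II}) \<and>
        star (tprod a b) X1 \<in> lspan ({tprod x y | x y. x \<in> II \<and> y \<in> Hset} \<union> {tprod x y | x y. x \<in> Hset \<and> y \<in> II})"
    "star X2 (tprod a b) \<in> lspan ({tprod x y | x y. x \<in> II \<and> y \<in> Hset} \<union> {tprod x y | x y. x \<in> Hset \<and> y \<in> II}) \<and>
        star (tprod a b) X2 \<in> lspan ({tprod x y | x y. x \<in> II \<and> y \<in> Hset} \<union> {tprod x y | x y. x \<in> Hset \<and> y \<in> II})"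
  then show "star (X1 + X2) (tprod a b) \<in> lspan ({tprod x y | x y. x \<in> II \<and> y \<in> Hset} \<union> {tprod x y | x y. x \<in> Hset \<and> y \<in> II}) \<and>
        star (tprod a b) (X1 + X2) \<in> lspan ({tprod x y | x y. x \<in> II \<and> y \<in> Hset} \<union> {tprod x y | x y. x \<in> Hset \<and> y \<in> II})"
    by (simp add: star_add1 star_add2 subsp_add[OF subsp_lspan])
qed

lemma star_LL:
  assumes X: "X \<in> LL" and Y: "Y \<in> tspan Hset Hset"
  shows "star X Y \<in> LL \<and> star Y X \<in> LL"
  using Y unfolding tspan_def
proof (rule lspan_induct)
  show "star X 0 \<in> LL \<and> star 0 X \<in> LL"
    by (simp add: star_zero1 star_zero2 subsp_zero[OF LL_subsp])
next
  fix z :: "'b \<times> 'b \<Rightarrow> 'k" and c :: 'k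
  assume "z \<in> {tprod x y | x y. x \<in> Hset \<and> y \<in> Hset}"
  then obtain a b where z: "z = tprod a b" "a \<in> Hset" "b \<in> Hset" by blast
  show "star X (\<lambda>p. c * z p) \<in> LL \<and> star (\<lambda>p. c * z p) X \<in> LL"
    using star_gen[OF X z(2,3)] unfolding z(1)
    by (simp add: star_scale1 star_scale2 subsp_scale[OF LL_subsp])
next
  fix Y1 Y2 :: "'b \<times> 'b \<Rightarrow> 'k" assume "star X Y1 \<in> LL \<and> star Y1 X \<in> LL" "star X Y2 \<in> LL \<and> star Y2 X \<in> LL"
  then show "star X (Y1 + Y2) \<in> LL \<and> star (Y1 + Y2) X \<in> LL"
    by (simp add: star_add1 star_add2 subsp_add[OF LL_subsp])
qed

lemma chi_comult: "dual_comult deg M (chi n) =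
   (\<Sum>i\<in>{..n}. tprod (chi i) (comp deg (n - i) phi) + tprod (comp deg i psi) (chi (n - i)))"
proof (rule ext, clarify)
  fix b c
  let ?v = "phi b * phi c - psi b * psi c"
  have R: "(\<Sum>i\<in>{..n}. tprod (chi i) (comp deg (n - i) phi) + tprod (comp deg i psi) (chi (n - i))) (b, c)
      = (\<Sum>i\<in>{..n}. if i = deg b \<and> deg c = n - i then ?v else 0)"
    unfolding sum_fun_app by (rule sum.cong) (auto simp: chi_def comp_def tprod_def algebra_simps)
  have L: "dual_comult deg M (chi n) (b, c) = (if deg b + deg c = n then ?v else 0)"
  proof -
    have "dual_comult deg M (chi n) (b, c)
        = (\<Sum>e\<in>dset deg (deg b + deg c). (if deg b + deg c = n then M b c e * phi e - M b c e * psi e else 0))"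
      unfolding dual_comult_pt by (rule sum.cong) (auto simp: chi_def comp_def algebra_simps)
    also have "\<dots> = (if deg b + deg c = n then ?v else 0)"
      by (simp add: sum_subtractf phi_mult psi_mult)
    finally show ?thesis .
  qed
  show "dual_comult deg M (chi n) (b, c) =
     (\<Sum>i\<in>{..n}. tprod (chi i) (comp deg (n - i) phi) + tprod (comp deg i psi) (chi (n - i))) (b, c)"
  proof (cases "deg b + deg c = n")
    case True
    have "(\<Sum>i\<in>{..n}. if i = deg b \<and> deg c = n - i then ?v else 0) = ?v"
      by (subst sum_single[where a = "deg b"]) (use True in auto)
    then show ?thesis using True L R by simp
  next
    case False
    have "(\<Sum>i\<in>{..n}. if i = deg b \<and> deg c = n - i then ?v else 0) = 0"
      by (rule sum.neutral) (use False in auto)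
    then show ?thesis using False L R by simp
  qed
qed

lemma chi_LL: "dual_comult deg M (chi n) \<in> LL"
  unfolding chi_comult
  by (intro subsp_sum[OF LL_subsp] subsp_add[OF LL_subsp] LL_gen1 LL_gen2 chi_I comp_Hset)

lemma I_comult: "f \<in> II \<Longrightarrow> dual_comult deg M f \<in> LL"
proof -
  let ?J = "{f \<in> II. dual_comult deg M f \<in> LL}"
  have "dual_ideal deg D ?J"
    unfolding dual_ideal_def
  proof (intro conjI ballI)
    show "?J \<subseteq> Hset" using I_Hset by blast
    show "subsp ?J" unfolding subsp_def
      using I_subsp by (auto simp: dual_comult_add dual_comult_scale dual_comult_zero
          subsp_zero subsp_add subsp_scale LL_subsp)
  next
    fix f g :: "'b \<Rightarrow> 'k" assume f: "f \<in> ?J" and g: "g \<in> Hset"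
    have Y: "dual_comult deg M g \<in> tspan Hset Hset"
      by (rule Hset_tspan[OF dual_comult_Hset[OF g]])
    show "conv deg D f g \<in> ?J"
      using f g I_convL star_LL[OF _ Y, of "dual_comult deg M f"] by (simp add: dual_comult_conv)
    show "conv deg D g f \<in> ?J"
      using f g I_convR star_LL[OF _ Y, of "dual_comult deg M f"] by (simp add: dual_comult_conv)
  qed
  moreover have "chi n \<in> ?J" for n using chi_I chi_LL by blast
  ultimately have "II \<subseteq> ?J" by (rule I_min)
  then show "f \<in> II \<Longrightarrow> dual_comult deg M f \<in> LL" by blast
qed

end

context gch begin

lemma dual_antip_pt: "dual_antip deg A f b = (\<Sum>d\<in>dset deg (deg b). A b d * f d)"
  by (simp add: dual_antip_def)

lemma dual_antip_add: "dual_antip deg A (f + g) = dual_antip deg A f + dual_antip deg A g"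
  by (rule ext) (simp add: dual_antip_pt sum.distrib[symmetric] algebra_simps)
lemma dual_antip_scale: "dual_antip deg A (\<lambda>p. c * f p) = (\<lambda>p. c * dual_antip deg A f p)"
  by (rule ext) (simp add: dual_antip_pt sum_distrib_left algebra_simps)
lemma dual_antip_zero: "dual_antip deg A 0 = 0"
  by (rule ext) (simp add: dual_antip_pt)
lemma dual_antip_neg: "dual_antip deg A (- f) = - dual_antip deg A f"
  by (rule ext) (simp add: dual_antip_pt sum_negf)

lemma dual_antip_Hset:
  assumes f: "f \<in> Hset"
  shows "dual_antip deg A f \<in> Hset"
proof (rule Hset_lowI[of _ "bd f"])
  fix b assume "dual_antip deg A f b \<noteq> 0"
  then obtain d where "d \<in> dset deg (deg b)" "A b d * f d \<noteq> 0"
    unfolding dual_antip_pt by (meson sum.not_neutral_contains_not_neutral)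
  then show "deg b \<le> bd f" using bd_ge[OF f, of d] by auto
qed

definition mS :: "('b \<times> 'b \<Rightarrow> 'k) \<Rightarrow> 'b \<Rightarrow> 'k" where
  "mS X = (\<lambda>b. \<Sum>c\<in>lowset deg (deg b). \<Sum>d\<in>lowset deg (deg b).
      D b c d * (\<Sum>e\<in>dset deg (deg c). A c e * X (e, d)))"

lemma mS_tprod: "mS (tprod x y) = conv deg D (dual_antip deg A x) y"
  by (rule ext) (simp add: mS_def conv_def dual_antip_pt tprod_def sum_distrib_left sum_distrib_right mult_ac)

lemma mS_add: "mS (X + Y) = mS X + mS Y"
  by (rule ext) (simp add: mS_def sum.distrib distrib_left)
lemma mS_scale: "mS (\<lambda>p. c * X p) = (\<lambda>p. c * mS X p)"
  by (rule ext) (simp add: mS_def sum_distrib_left algebra_simps)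
lemma mS_zero: "mS 0 = 0"
  by (rule ext) (simp add: mS_def)

lemma sum_pull_last: "(\<Sum>c\<in>C. \<Sum>d\<in>Dd. \<Sum>e\<in>E c. \<Sum>g\<in>G. F c d e g) = (\<Sum>g\<in>G. \<Sum>c\<in>C. \<Sum>d\<in>Dd. \<Sum>e\<in>E c. F c d e g)"
proof -
  have "(\<Sum>c\<in>C. \<Sum>d\<in>Dd. \<Sum>e\<in>E c. \<Sum>g\<in>G. F c d e g) = (\<Sum>c\<in>C. \<Sum>d\<in>Dd. \<Sum>g\<in>G. \<Sum>e\<in>E c. F c d e g)"
    by (rule sum.cong[OF refl], rule sum.cong[OF refl], rule sum.swap)
  also have "\<dots> = (\<Sum>c\<in>C. \<Sum>g\<in>G. \<Sum>d\<in>Dd. \<Sum>e\<in>E c. F c d e g)"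
    by (rule sum.cong[OF refl], rule sum.swap)
  also have "\<dots> = (\<Sum>g\<in>G. \<Sum>c\<in>C. \<Sum>d\<in>Dd. \<Sum>e\<in>E c. F c d e g)"
    by (rule sum.swap)
  finally show ?thesis .
qed

lemma mS_comult: "mS (dual_comult deg M f) = (\<lambda>b. if b = u then f u else 0)"
proof
  fix b
  let ?L = "lowset deg (deg b)" and ?G = "dset deg (deg b)"
  have "mS (dual_comult deg M f) b = (\<Sum>c\<in>?L. \<Sum>d\<in>?L. \<Sum>e\<in>dset deg (deg c).
      \<Sum>g\<in>dset deg (deg e + deg d). f g * (D b c d * A c e * M e d g))"
    by (simp add: mS_def dual_comult_pt sum_distrib_left mult_ac)
  also have "\<dots> = (\<Sum>c\<in>?L. \<Sum>d\<in>?L. \<Sum>e\<in>dset deg (deg c).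
      \<Sum>g\<in>?G. f g * (D b c d * A c e * M e d g))"
  proof (rule sum.cong[OF refl], rule sum.cong[OF refl], rule sum.cong[OF refl])
    fix c d e assume e: "e \<in> dset deg (deg c)"
    show "(\<Sum>g\<in>dset deg (deg e + deg d). f g * (D b c d * A c e * M e d g)) =
          (\<Sum>g\<in>?G. f g * (D b c d * A c e * M e d g))"
    proof (cases "D b c d = 0")
      case False
      then have "deg c + deg d = deg b" by (rule D_deg)
      then show ?thesis using e by simp
    qed simp
  qed
  also have "\<dots> = (\<Sum>g\<in>?G. \<Sum>c\<in>?L. \<Sum>d\<in>?L. \<Sum>e\<in>dset deg (deg c). f g * (D b c d * A c e * M e d g))"
    by (rule sum_pull_last)
  also have "\<dots> = (\<Sum>g\<in>?G. f g * (\<Sum>c\<in>?L. \<Sum>d\<in>?L. \<Sum>e\<in>dset deg (deg c). D b c d * A c e * M e d g))"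
    by (rule sum.cong[OF refl]) (simp only: sum_distrib_left)
  also have "\<dots> = (\<Sum>g\<in>?G. f g * (eps b * (if g = u then 1 else 0)))"
    by (simp only: antipL)
  also have "\<dots> = (if b = u then f u else 0)"
  proof (cases "b = u")
    case True
    have "?G = {u}"
    proof (rule set_eqI)
      fix x show "x \<in> ?G \<longleftrightarrow> x \<in> {u}" using deg0[of x] True by simp
    qed
    then show ?thesis using True by (simp add: eps_eq)
  qed (simp add: eps_eq)
  finally show "mS (dual_comult deg M f) b = (if b = u then f u else 0)" .
qed

definition lowpart :: "nat \<Rightarrow> ('b \<Rightarrow> 'k) \<Rightarrow> ('b \<Rightarrow> 'k)" where
  "lowpart n f = (\<lambda>b. if deg b < n then f b else 0)"

lemma lowpart_sum: "lowpart n f = (\<Sum>m\<in>{..<n}. comp deg m f)"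
proof
  fix b
  have "(\<Sum>m\<in>{..<n}. comp deg m f) b = (\<Sum>m\<in>{..<n}. if m = deg b then f b else 0)"
    unfolding sum_fun_app by (rule sum.cong) (auto simp: comp_def)
  then show "lowpart n f b = (\<Sum>m\<in>{..<n}. comp deg m f) b" by (simp add: lowpart_def)
qed

definition RR :: "nat \<Rightarrow> ('b \<times> 'b \<Rightarrow> 'k) \<Rightarrow> ('b \<times> 'b \<Rightarrow> 'k)" where
  "RR n X = (\<lambda>(b, c). if deg b < n then X (b, c) else 0)"

lemma RR_tprod: "RR n (tprod x y) = tprod (lowpart n x) y"
  by (rule ext, clarify) (simp add: RR_def tprod_def lowpart_def)
lemma RR_add: "RR n (X + Y) = RR n X + RR n Y"
  by (rule ext, clarify) (simp add: RR_def)
lemma RR_scale: "RR n (\<lambda>p. c * X p) = (\<lambda>p. c * RR n X p)"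
  by (rule ext, clarify) (simp add: RR_def)
lemma RR_zero: "RR n 0 = 0"
  by (rule ext, clarify) (simp add: RR_def)

lemma comult_split:
  assumes hom: "\<And>b. f b \<noteq> 0 \<Longrightarrow> deg b = n"
  shows "dual_comult deg M f = RR n (dual_comult deg M f) + tprod f (unitv u)"
proof (rule ext, clarify)
  fix b c
  show "dual_comult deg M f (b, c) = (RR n (dual_comult deg M f) + tprod f (unitv u)) (b, c)"
  proof (cases "deg b < n")
    case True
    then have "f b = 0" using hom by fastforce
    then show ?thesis using True by (simp add: RR_def tprod_def)
  next
    case False
    show ?thesis
    proof (cases "c = u")
      case True
      have "dual_comult deg M f (b, c) = f b"
        unfolding dual_comult_pt True
        by (subst sum_single[where a = b]) (auto simp: fin_dset M_unitR)
      then show ?thesis using False True by (simp add: RR_def tprod_def unitv_def)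
    next
      case cu: False
      then have "deg c > 0" by (metis deg0 gr0I)
      have "dual_comult deg M f (b, c) = 0"
        unfolding dual_comult_pt
      proof (rule sum.neutral, rule ballI)
        fix e assume "e \<in> dset deg (deg b + deg c)"
        then have "deg e \<noteq> n" using False \<open>deg c > 0\<close> by simp
        then show "M b c e * f e = 0" using hom by fastforce
      qed
      then show ?thesis using False cu by (simp add: RR_def tprod_def unitv_def)
    qed
  qed
qed

lemma antip_rec:
  assumes hom: "\<And>b. f b \<noteq> 0 \<Longrightarrow> deg b = n" and fu: "f u = 0"
  shows "dual_antip deg A f = - mS (RR n (dual_comult deg M f))"
proof -
  have "mS (dual_comult deg M f) = 0"
    by (rule ext) (simp add: mS_comult fu)
  moreover have "mS (dual_comult deg M f) = mS (RR n (dual_comult deg M f)) + dual_antip deg A f"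
    apply (subst comult_split[where n = n])
     apply (erule hom)
    apply (subst mS_add)
    apply (subst mS_tprod)
    apply (subst conv_unitR)
    apply (rule refl)
    done
  ultimately show ?thesis by (simp add: eq_neg_iff_add_eq_0 add.commute)
qed

end

context gchc begin

lemma lowpart_I: "x \<in> II \<Longrightarrow> lowpart n x \<in> II"
  unfolding lowpart_sum by (intro subsp_sum[OF I_subsp] I_comp)

lemma lowpart_Hset: "lowpart n x \<in> Hset"
  unfolding lowpart_sum by (intro subsp_sum[OF subsp_Hset] comp_Hset)

lemma mSRR_LL:
  assumes IH: "\<And>g. g \<in> II \<Longrightarrow> (\<forall>b. g b \<noteq> 0 \<longrightarrow> deg b < n) \<Longrightarrow> dual_antip deg A g \<in> II"
    and X: "X \<in> LL"
  shows "mS (RR n X) \<in> II"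
  using X unfolding LL_def
proof (rule lspan_induct)
  show "mS (RR n 0) \<in> II" by (simp add: RR_zero mS_zero subsp_zero[OF I_subsp])
next
  fix z :: "'b \<times> 'b \<Rightarrow> 'k" and c :: 'k
  assume "z \<in> {tprod x y | x y. x \<in> II \<and> y \<in> Hset} \<union> {tprod x y | x y. x \<in> Hset \<and> y \<in> II}"
  then obtain x y where z: "z = tprod x y" and xy: "(x \<in> II \<and> y \<in> Hset) \<or> (x \<in> Hset \<and> y \<in> II)" by blast
  have "conv deg D (dual_antip deg A (lowpart n x)) y \<in> II"
    using xy
  proof
    assume a: "x \<in> II \<and> y \<in> Hset"
    have "dual_antip deg A (lowpart n x) \<in> II"
      by (rule IH) (use lowpart_I[of x n] a in \<open>auto simp: lowpart_def\<close>)
    then show ?thesis using a by (simp add: I_convL)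
  next
    assume a: "x \<in> Hset \<and> y \<in> II"
    show ?thesis using a by (simp add: I_convR dual_antip_Hset lowpart_Hset)
  qed
  then show "mS (RR n (\<lambda>p. c * z p)) \<in> II"
    unfolding z by (simp add: RR_scale mS_scale RR_tprod mS_tprod subsp_scale[OF I_subsp])
next
  fix X1 X2 :: "'b \<times> 'b \<Rightarrow> 'k"
  assume "mS (RR n X1) \<in> II" "mS (RR n X2) \<in> II"
  then show "mS (RR n (X1 + X2)) \<in> II" by (simp add: RR_add mS_add subsp_add[OF I_subsp])
qed

lemma I_antip_lt: "\<forall>g\<in>II. (\<forall>b. g b \<noteq> 0 \<longrightarrow> deg b < n) \<longrightarrow> dual_antip deg A g \<in> II"
proof (induction n)
  case 0
  show ?case
  proof (intro ballI impI)
    fix g assume "\<forall>b. g b \<noteq> (0::'k) \<longrightarrow> deg b < 0"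
    then have "g = 0" by (auto simp: fun_eq_iff)
    then show "dual_antip deg A g \<in> II" by (simp add: dual_antip_zero subsp_zero[OF I_subsp])
  qed
next
  case (Suc n)
  have IH: "\<And>g. g \<in> II \<Longrightarrow> (\<forall>b. g b \<noteq> 0 \<longrightarrow> deg b < n) \<Longrightarrow> dual_antip deg A g \<in> II"
    using Suc.IH by blast
  show ?case
  proof (intro ballI impI)
    fix g assume g: "g \<in> II" and lt: "\<forall>b. g b \<noteq> 0 \<longrightarrow> deg b < Suc n"
    have split: "g = comp deg n g + lowpart n g"
    proof
      fix b show "g b = (comp deg n g + lowpart n g) b"
        using lt by (cases "g b = 0") (auto simp: comp_def lowpart_def)
    qed
    have cI: "comp deg n g \<in> II" by (rule I_comp[OF g])
    have 1: "dual_antip deg A (lowpart n g) \<in> II"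
      by (rule IH) (use lowpart_I[OF g, of n] in \<open>auto simp: lowpart_def\<close>)
    have "dual_antip deg A (comp deg n g) = - mS (RR n (dual_comult deg M (comp deg n g)))"
      by (rule antip_rec) (use I_u[OF cI] in \<open>auto simp: comp_def split: if_splits\<close>)
    moreover have "mS (RR n (dual_comult deg M (comp deg n g))) \<in> II"
      by (rule mSRR_LL[OF IH I_comult[OF cI]])
    ultimately have 2: "dual_antip deg A (comp deg n g) \<in> II"
      by (simp add: subsp_neg[OF I_subsp])
    have "dual_antip deg A g = dual_antip deg A (comp deg n g) + dual_antip deg A (lowpart n g)"
      by (subst split) (simp add: dual_antip_add)
    then show "dual_antip deg A g \<in> II" using 1 2 by (simp add: subsp_add[OF I_subsp])
  qed
qed

lemma I_antip: "f \<in> II \<Longrightarrow> dual_antip deg A f \<in> II"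
proof -
  assume f: "f \<in> II"
  have "\<forall>b. f b \<noteq> 0 \<longrightarrow> deg b < Suc (bd f)"
    using bd_ge f I_Hset by (meson le_imp_less_Suc subsetD)
  then show ?thesis using I_antip_lt f by blast
qed

lemma I_hopf: "graded_hopf_ideal_dual deg u M D A II"
  unfolding graded_hopf_ideal_dual_def graded_subsp_def
  using I_ideal I_comp I_comult I_u I_antip unfolding LL_def by blast

end

context gch begin

lemma hmult_pt: "hmult M h k d = (\<Sum>b\<in>supp h. \<Sum>c\<in>supp k. h b * k c * M b c d)"
  by (simp add: hmult_def)

lemma hmult_Hset:
  assumes h: "h \<in> Hset" and k: "k \<in> Hset"
  shows "hmult M h k \<in> Hset"
proof (rule Hset_lowI[of _ "bd h + bd k"])
  fix d assume "hmult M h k d \<noteq> 0"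
  then obtain b where b: "b \<in> supp h" "(\<Sum>c\<in>supp k. h b * k c * M b c d) \<noteq> 0"
    unfolding hmult_pt by (meson sum.not_neutral_contains_not_neutral)
  then obtain c where c: "c \<in> supp k" "h b * k c * M b c d \<noteq> 0"
    by (meson sum.not_neutral_contains_not_neutral)
  then have "deg d = deg b + deg c" "h b \<noteq> 0" "k c \<noteq> 0" using M_deg by auto
  then show "deg d \<le> bd h + bd k" using bd_ge[OF h] bd_ge[OF k] by fastforce
qed

lemma pair_hmult:
  assumes h: "h \<in> Hset" and k: "k \<in> Hset"
  shows "pair f (hmult M h k) = pair (dual_comult deg M f) (tprod h k)"
proof -
  let ?S = "lowset deg (bd h + bd k)"
  have fS: "finite ?S" by (rule fin_lowset)
  have sub: "supp (hmult M h k) \<subseteq> ?S"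
    using hmult_Hset[OF h k] proof -
    show ?thesis
    proof
      fix d assume "d \<in> supp (hmult M h k)"
      then have "hmult M h k d \<noteq> 0" by (simp add: supp_def)
      then obtain b where b: "b \<in> supp h" "(\<Sum>c\<in>supp k. h b * k c * M b c d) \<noteq> 0"
        unfolding hmult_pt by (meson sum.not_neutral_contains_not_neutral)
      then obtain c where c: "c \<in> supp k" "h b * k c * M b c d \<noteq> 0"
        by (meson sum.not_neutral_contains_not_neutral)
      then have "deg d = deg b + deg c" "h b \<noteq> 0" "k c \<noteq> 0" using M_deg by auto
      then show "d \<in> ?S" using bd_ge[OF h] bd_ge[OF k] by fastforce
    qed
  qed
  have "pair f (hmult M h k) = (\<Sum>d\<in>?S. f d * hmult M h k d)"
    by (rule pair_superset[OF fS sub])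
  also have "\<dots> = (\<Sum>d\<in>?S. \<Sum>b\<in>supp h. \<Sum>c\<in>supp k. h b * k c * (M b c d * f d))"
    by (simp add: hmult_pt sum_distrib_left mult_ac)
  also have "\<dots> = (\<Sum>b\<in>supp h. \<Sum>c\<in>supp k. \<Sum>d\<in>?S. h b * k c * (M b c d * f d))"
    by (rule sum_perm3)
  also have "\<dots> = (\<Sum>b\<in>supp h. \<Sum>c\<in>supp k. h b * k c * dual_comult deg M f (b, c))"
  proof (rule sum.cong[OF refl], rule sum.cong[OF refl])
    fix b c assume "b \<in> supp h" "c \<in> supp k"
    then have le: "deg b + deg c \<le> bd h + bd k" using bd_ge[OF h] bd_ge[OF k]
      by (simp add: supp_def add_mono)
    have "(\<Sum>d\<in>?S. M b c d * f d) = dual_comult deg M f (b, c)"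
      unfolding dual_comult_pt by (rule sum_eq_sup) (use le M_deg fin_dset fS in auto)
    moreover have "(\<Sum>d\<in>?S. h b * k c * (M b c d * f d)) = h b * k c * (\<Sum>d\<in>?S. M b c d * f d)"
      by (rule sum_distrib_left[symmetric])
    ultimately show "(\<Sum>d\<in>?S. h b * k c * (M b c d * f d)) = h b * k c * dual_comult deg M f (b, c)"
      by simp
  qed
  also have "\<dots> = (\<Sum>z\<in>supp h \<times> supp k. dual_comult deg M f z * tprod h k z)"
    unfolding sum.cartesian_product by (rule sum.cong) (auto simp: tprod_def mult_ac)
  also have "\<dots> = pair (dual_comult deg M f) (tprod h k)"
    by (simp add: pair_def supp_tprod)
  finally show ?thesis .
qed

lemma hantip_pt: "hantip A h d = (\<Sum>b\<in>supp h. h b * A b d)"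
  by (simp add: hantip_def)

lemma hantip_supp:
  assumes h: "h \<in> Hset"
  shows "supp (hantip A h) \<subseteq> lowset deg (bd h)"
proof
  fix d assume "d \<in> supp (hantip A h)"
  then have "hantip A h d \<noteq> 0" by (simp add: supp_def)
  then obtain b where "b \<in> supp h" "h b * A b d \<noteq> 0"
    unfolding hantip_pt by (meson sum.not_neutral_contains_not_neutral)
  then show "d \<in> lowset deg (bd h)" using A_deg[of b d] bd_ge[OF h, of b] by auto
qed

lemma hantip_Hset: "h \<in> Hset \<Longrightarrow> hantip A h \<in> Hset"
  by (rule Hset_low[OF hantip_supp])

lemma pair_hantip:
  assumes h: "h \<in> Hset"
  shows "pair f (hantip A h) = pair (dual_antip deg A f) h"
proof -
  let ?S = "lowset deg (bd h)"
  have fS: "finite ?S" by (rule fin_lowset)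
  have "pair f (hantip A h) = (\<Sum>d\<in>?S. f d * hantip A h d)"
    by (rule pair_superset[OF fS hantip_supp[OF h]])
  also have "\<dots> = (\<Sum>b\<in>supp h. \<Sum>d\<in>?S. h b * (A b d * f d))"
    by (simp add: hantip_pt sum_distrib_left mult_ac sum.swap[of _ ?S])
  also have "\<dots> = (\<Sum>b\<in>supp h. dual_antip deg A f b * h b)"
  proof (rule sum.cong[OF refl])
    fix b assume "b \<in> supp h"
    then have le: "deg b \<le> bd h" using bd_ge[OF h] by (simp add: supp_def)
    have "(\<Sum>d\<in>?S. A b d * f d) = dual_antip deg A f b"
      unfolding dual_antip_pt by (rule sum_eq_sup) (use le A_deg fin_dset fS in auto)
    moreover have "(\<Sum>d\<in>?S. h b * (A b d * f d)) = h b * (\<Sum>d\<in>?S. A b d * f d)"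
      by (rule sum_distrib_left[symmetric])
    ultimately show "(\<Sum>d\<in>?S. h b * (A b d * f d)) = dual_antip deg A f b * h b"
      by (simp add: mult.commute)
  qed
  also have "\<dots> = pair (dual_antip deg A f) h" by (simp add: pair_def)
  finally show ?thesis .
qed

end

context gchc begin

lemma LL_pair_zero:
  assumes F: "F \<in> LL" and h: "h \<in> TT" and k: "k \<in> TT"
  shows "pair F (tprod h k) = 0"
  using F unfolding LL_def
proof (rule lspan_induct)
  show "pair 0 (tprod h k) = 0" by (rule pair_zero1)
next
  fix z :: "'b \<times> 'b \<Rightarrow> 'k" and c :: 'k
  assume "z \<in> {tprod x y | x y. x \<in> II \<and> y \<in> Hset} \<union> {tprod x y | x y. x \<in> Hset \<and> y \<in> II}"
  then obtain x y where z: "z = tprod x y" and xy: "(x \<in> II \<and> y \<in> Hset) \<or> (x \<in> Hset \<and> y \<in> II)" by blast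
  have "pair x h * pair y k = 0" using xy h k by (auto simp: TT_def)
  then show "pair (\<lambda>p. c * z p) (tprod h k) = 0" unfolding z by (simp add: pair_scale1 pair_tprod)
next
  fix X1 X2 :: "'b \<times> 'b \<Rightarrow> 'k"
  assume "pair X1 (tprod h k) = 0" "pair X2 (tprod h k) = 0"
  then show "pair (X1 + X2) (tprod h k) = 0" by (simp add: pair_add1)
qed

lemma TT_mult: "h \<in> TT \<Longrightarrow> k \<in> TT \<Longrightarrow> hmult M h k \<in> TT"
proof -
  assume h: "h \<in> TT" and k: "k \<in> TT"
  then have hH: "h \<in> Hset" and kH: "k \<in> Hset" by (auto simp: TT_def)
  show ?thesis unfolding TT_def
  proof (intro CollectI conjI ballI)
    show "hmult M h k \<in> Hset" by (rule hmult_Hset[OF hH kH])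
    fix f assume "f \<in> II"
    then show "pair f (hmult M h k) = 0"
      using pair_hmult[OF hH kH] LL_pair_zero[OF I_comult h k] by simp
  qed
qed

lemma TT_unit: "unitv u \<in> TT"
  unfolding TT_def
proof (intro CollectI conjI ballI)
  show "(unitv u :: 'b \<Rightarrow> 'k) \<in> Hset" by (rule unitv_Hset)
  fix f assume f: "f \<in> II"
  have "pair f (unitv u) = (\<Sum>b\<in>{u}. f b * unitv u b)"
    by (rule pair_superset) (auto simp: supp_def unitv_def)
  then show "pair f (unitv u) = 0" using I_u[OF f] by (simp add: unitv_def)
qed

lemma TT_antip: "h \<in> TT \<Longrightarrow> hantip A h \<in> TT"
proof -
  assume h: "h \<in> TT"
  then have hH: "h \<in> Hset" by (simp add: TT_def)
  show ?thesis unfolding TT_def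
  proof (intro CollectI conjI ballI)
    show "hantip A h \<in> Hset" by (rule hantip_Hset[OF hH])
    fix f assume "f \<in> II"
    then show "pair f (hantip A h) = 0"
      using pair_hantip[OF hH] I_antip h by (simp add: TT_def)
  qed
qed

lemma TT_hopf: "graded_hopf_subalg deg u M D A TT"
  unfolding graded_hopf_subalg_def
  using TT_Hset TT_subsp TT_graded TT_unit TT_mult TT_coalg TT_antip by blast

end

context gch begin

lemma conv_sum1: "conv deg D (sum G R) g = (\<Sum>r\<in>R. conv deg D (G r) g)"
proof (induction R rule: infinite_finite_induct)
  case (insert x R)
  then show ?case by (simp only: sum.insert[OF insert(1,2)] conv_add1 insert(3))
qed (simp_all add: conv_def zero_fun_def)

lemma conv_sum2: "conv deg D g (sum G R) = (\<Sum>r\<in>R. conv deg D g (G r))"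
proof (induction R rule: infinite_finite_induct)
  case (insert x R)
  then show ?case by (simp only: sum.insert[OF insert(1,2)] conv_add2 insert(3))
qed (simp_all add: conv_def zero_fun_def)

lemma Hset_expand:
  assumes "g \<in> Hset"
  shows "g = (\<Sum>r\<in>supp g. (\<lambda>w. g r * unitv r w))"
proof
  fix w
  have fin: "finite (supp g)" using assms by (simp add: Hset_def)
  have "(\<Sum>r\<in>supp g. (\<lambda>w. g r * unitv r w)) w = (\<Sum>r\<in>supp g. if r = w then g r else 0)"
    unfolding sum_fun_app by (rule sum.cong) (auto simp: unitv_def)
  also have "\<dots> = g w" using fin by (simp add: supp_def)
  finally show "g w = (\<Sum>r\<in>supp g. (\<lambda>w. g r * unitv r w)) w" by simp
qed

lemma conv_units:
  "conv deg D (conv deg D (unitv p) x) (unitv q) b =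
    (\<Sum>e\<in>lowset deg (deg b). \<Sum>c\<in>lowset deg (deg b). D b e q * D e p c * x c)"
proof -
  let ?L = "lowset deg (deg b)"
  have fL: "finite ?L" by (rule fin_lowset)
  have A: "(\<Sum>d\<in>?L. D b e d * y * unitv q d) = D b e q * y" for e y
  proof (cases "q \<in> ?L")
    case True
    then show ?thesis by (subst sum_single[where a = q]) (auto simp: fL unitv_def)
  next
    case False
    then have "D b e q = 0" using D_zero2 by simp
    then show ?thesis using False by (auto simp: unitv_def intro!: sum.neutral)
  qed
  have B: "conv deg D (unitv p) x e = (\<Sum>c\<in>?L. D e p c * x c)" if "e \<in> ?L" for e
  proof -
    have "conv deg D (unitv p) x e = (\<Sum>c1\<in>?L. \<Sum>c\<in>?L. D e c1 c * unitv p c1 * x c)"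
      by (rule conv_eq) (use that fL in auto)
    also have "\<dots> = (\<Sum>c\<in>?L. D e p c * x c)"
    proof (cases "p \<in> ?L")
      case True
      then show ?thesis by (subst sum_single[where a = p]) (auto simp: fL unitv_def)
    next
      case False
      then have "deg e < deg p" using that by simp
      then have "D e p c = 0" for c using D_zero1 by simp
      then show ?thesis using False by (auto simp: unitv_def intro!: sum.neutral)
    qed
    finally show ?thesis .
  qed
  have "conv deg D (conv deg D (unitv p) x) (unitv q) b = (\<Sum>e\<in>?L. D b e q * conv deg D (unitv p) x e)"
    unfolding conv_def by (rule sum.cong[OF refl]) (rule A)
  also have "\<dots> = (\<Sum>e\<in>?L. \<Sum>c\<in>?L. D b e q * D e p c * x c)"
    by (rule sum.cong[OF refl]) (simp add: B sum_distrib_left mult_ac)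
  finally show ?thesis .
qed

lemma pair_units:
  assumes "h \<in> Hset"
  shows "pair (conv deg D (conv deg D (unitv p) x) (unitv q)) h = delta2_mid deg D x h (p, q)"
  unfolding pair_def delta2_mid_def by (simp add: conv_units mult.commute)

lemma pair_gen_zero:
  assumes h: "h \<in> Hset" and a: "a \<in> Hset" and b: "b \<in> Hset"
    and z: "\<And>p q. pair (conv deg D (conv deg D (unitv p) x) (unitv q)) h = 0"
  shows "pair (conv deg D (conv deg D a x) b) h = 0"
proof -
  have zb: "pair (conv deg D (conv deg D (unitv p) x) b) h = 0" for p
  proof -
    have "pair (conv deg D (conv deg D (unitv p) x) b) h
        = pair (\<Sum>q\<in>supp b. (\<lambda>w. b q * conv deg D (conv deg D (unitv p) x) (unitv q) w)) h"
      by (subst Hset_expand[OF b]) (simp add: conv_sum2 conv_scale2)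
    also have "\<dots> = 0" by (simp add: pair_sum1 pair_scale1 z)
    finally show ?thesis .
  qed
  have "conv deg D a x = (\<Sum>p\<in>supp a. (\<lambda>w. a p * conv deg D (unitv p) x w))"
    by (subst Hset_expand[OF a]) (simp add: conv_sum1 conv_scale1)
  then have "pair (conv deg D (conv deg D a x) b) h
      = pair (\<Sum>p\<in>supp a. (\<lambda>w. a p * conv deg D (conv deg D (unitv p) x) b w)) h"
    by (simp add: conv_sum1 conv_scale1)
  also have "\<dots> = 0" by (simp add: pair_sum1 pair_scale1 zb)
  finally show ?thesis .
qed

lemma dmid_zero_big:
  assumes hom: "\<And>b. h b \<noteq> 0 \<Longrightarrow> deg b = N" and big: "N < deg p + deg q"
  shows "delta2_mid deg D x h (p, q) = 0"
  unfolding delta2_mid_def split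
proof (intro sum.neutral ballI)
  fix b assume "b \<in> supp h"
  then have db: "deg b = N" using hom by (simp add: supp_def)
  have key: "D b e q * D e p c * x c = 0" for e c
  proof (cases "D b e q = 0 \<or> D e p c = 0")
    case False
    then have "deg e + deg q = deg b" "deg p + deg c = deg e" using D_deg by auto
    then show ?thesis using db big by simp
  qed auto
  show "h b * (\<Sum>e\<in>lowset deg (deg b). \<Sum>c\<in>lowset deg (deg b). D b e q * D e p c * x c) = 0"
    by (simp only: key sum.neutral_const mult_zero_right)
qed

end

context gchc begin

lemma dmid_chi:
  assumes hom: "\<And>b. h b \<noteq> 0 \<Longrightarrow> deg b = N"
  shows "delta2_mid deg D (chi n) h (p, q) =
    (if n + deg p + deg q = N then delta2_mid deg D (\<lambda>c. phi c - psi c) h (p, q) else 0)"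
proof -
  have key: "D b e q * D e p c * chi n c =
      (if n + deg p + deg q = N then D b e q * D e p c * (phi c - psi c) else 0)"
    if "deg b = N" for b e c
  proof (cases "D b e q = 0 \<or> D e p c = 0")
    case False
    then have "deg e + deg q = deg b" "deg p + deg c = deg e" using D_deg by auto
    then show ?thesis using that by (auto simp: chi_def comp_def)
  qed auto
  have "delta2_mid deg D (chi n) h (p, q) = (\<Sum>b\<in>supp h. h b * (\<Sum>e\<in>lowset deg (deg b). \<Sum>c\<in>lowset deg (deg b).
      (if n + deg p + deg q = N then D b e q * D e p c * (phi c - psi c) else 0)))"
    unfolding delta2_mid_def split
  proof (rule sum.cong[OF refl])
    fix b assume "b \<in> supp h"
    then have "deg b = N" using hom by (simp add: supp_def)
    then show "h b * (\<Sum>e\<in>lowset deg (deg b). \<Sum>c\<in>lowset deg (deg b). D b e q * D e p c * chi n c) =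
      h b * (\<Sum>e\<in>lowset deg (deg b). \<Sum>c\<in>lowset deg (deg b).
      (if n + deg p + deg q = N then D b e q * D e p c * (phi c - psi c) else 0))"
      using key by simp
  qed
  also have "\<dots> = (if n + deg p + deg q = N then delta2_mid deg D (\<lambda>c. phi c - psi c) h (p, q) else 0)"
    by (simp add: delta2_mid_def)
  finally show ?thesis .
qed

definition KK where
  "KK = lspan {conv deg D (conv deg D a (chi n)) b | a b n. a \<in> Hset \<and> b \<in> Hset}"

lemma KK_ideal: "dual_ideal deg D KK"
  unfolding dual_ideal_def
proof (intro conjI ballI)
  show "KK \<subseteq> Hset" unfolding KK_def
    by (rule lspan_Hset) (auto intro!: conv_Hset chi_Hset)
  show "subsp KK" unfolding KK_def by (rule subsp_lspan)
next
  fix f g :: "'b \<Rightarrow> 'k" assume f: "f \<in> KK" and g: "g \<in> Hset"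
  have "conv deg D f g \<in> KK \<and> conv deg D g f \<in> KK"
    using f unfolding KK_def
  proof (rule lspan_induct)
    show "conv deg D 0 g \<in> lspan {conv deg D (conv deg D a (chi n)) b | a b n. a \<in> Hset \<and> b \<in> Hset} \<and>
          conv deg D g 0 \<in> lspan {conv deg D (conv deg D a (chi n)) b | a b n. a \<in> Hset \<and> b \<in> Hset}"
      by (simp add: conv_zero1 conv_zero2 subsp_zero[OF subsp_lspan])
  next
    fix z :: "'b \<Rightarrow> 'k" and c :: 'k
    assume "z \<in> {conv deg D (conv deg D a (chi n)) b | a b n. a \<in> Hset \<and> b \<in> Hset}"
    then obtain a b n where z: "z = conv deg D (conv deg D a (chi n)) b" "a \<in> Hset" "b \<in> Hset" by blast
    have 1: "conv deg D z g \<in> lspan {conv deg D (conv deg D a (chi n)) b | a b n. a \<in> Hset \<and> b \<in> Hset}"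
      unfolding z(1) conv_assoc
      by (rule lspan_gen) (use z(2,3) g conv_Hset in \<open>auto simp: conv_assoc\<close>)
    have 2: "conv deg D g z \<in> lspan {conv deg D (conv deg D a (chi n)) b | a b n. a \<in> Hset \<and> b \<in> Hset}"
    proof -
      have "conv deg D g z = conv deg D (conv deg D (conv deg D g a) (chi n)) b"
        unfolding z(1) by (simp add: conv_assoc)
      then show ?thesis by (auto intro!: lspan_gen simp del: conv_assoc intro: conv_Hset z(2,3) g)
    qed
    show "conv deg D (\<lambda>p. c * z p) g \<in> lspan {conv deg D (conv deg D a (chi n)) b | a b n. a \<in> Hset \<and> b \<in> Hset} \<and>
          conv deg D g (\<lambda>p. c * z p) \<in> lspan {conv deg D (conv deg D a (chi n)) b | a b n. a \<in> Hset \<and> b \<in> Hset}"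
      using 1 2 by (simp add: conv_scale1 conv_scale2 subsp_scale[OF subsp_lspan])
  next
    fix f1 f2 :: "'b \<Rightarrow> 'k"
    assume "conv deg D f1 g \<in> lspan {conv deg D (conv deg D a (chi n)) b | a b n. a \<in> Hset \<and> b \<in> Hset} \<and>
          conv deg D g f1 \<in> lspan {conv deg D (conv deg D a (chi n)) b | a b n. a \<in> Hset \<and> b \<in> Hset}"
      "conv deg D f2 g \<in> lspan {conv deg D (conv deg D a (chi n)) b | a b n. a \<in> Hset \<and> b \<in> Hset} \<and>
          conv deg D g f2 \<in> lspan {conv deg D (conv deg D a (chi n)) b | a b n. a \<in> Hset \<and> b \<in> Hset}"
    then show "conv deg D (f1 + f2) g \<in> lspan {conv deg D (conv deg D a (chi n)) b | a b n. a \<in> Hset \<and> b \<in> Hset} \<and>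
          conv deg D g (f1 + f2) \<in> lspan {conv deg D (conv deg D a (chi n)) b | a b n. a \<in> Hset \<and> b \<in> Hset}"
      by (simp add: conv_add1 conv_add2 subsp_add[OF subsp_lspan])
  qed
  then show "conv deg D f g \<in> KK" "conv deg D g f \<in> KK" by auto
qed

lemma chi_KK: "chi n \<in> KK"
proof -
  have "chi n = conv deg D (conv deg D (unitv u) (chi n)) (unitv u)"
    by (simp add: conv_unitL conv_unitR)
  then show ?thesis unfolding KK_def by (auto intro!: lspan_gen unitv_Hset simp del: conv_unitL conv_unitR)
qed

lemma I_sub_KK: "II \<subseteq> KK"
  by (rule I_min[OF KK_ideal chi_KK])

lemma KK_pair_zero:
  assumes h: "h \<in> Hset" and z: "\<And>n p q. delta2_mid deg D (chi n) h (p, q) = 0" and f: "f \<in> KK"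
  shows "pair f h = 0"
  using f unfolding KK_def
proof (rule lspan_induct)
  show "pair 0 h = 0" by (rule pair_zero1)
next
  fix y :: "'b \<Rightarrow> 'k" and c :: 'k
  assume "y \<in> {conv deg D (conv deg D a (chi n)) b | a b n. a \<in> Hset \<and> b \<in> Hset}"
  then obtain a b n where y: "y = conv deg D (conv deg D a (chi n)) b" "a \<in> Hset" "b \<in> Hset" by blast
  have "pair y h = 0" unfolding y(1)
    by (rule pair_gen_zero[OF h y(2,3)]) (simp add: pair_units[OF h] z)
  then show "pair (\<lambda>p. c * y p) h = 0" by (simp add: pair_scale1)
next
  fix f1 f2 :: "'b \<Rightarrow> 'k" assume "pair f1 h = 0" "pair f2 h = 0"
  then show "pair (f1 + f2) h = 0" by (simp add: pair_add1)
qed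

lemma part_d:
  assumes h: "h \<in> Hset" and hom: "homogeneous deg h"
  shows "h \<in> TT \<longleftrightarrow> delta2_mid deg D (\<lambda>c. phi c - psi c) h = 0"
proof -
  obtain N where hN: "\<And>b. h b \<noteq> 0 \<Longrightarrow> deg b = N" using hom unfolding homogeneous_def by blast
  show ?thesis
  proof
    assume hT: "h \<in> TT"
    show "delta2_mid deg D (\<lambda>c. phi c - psi c) h = 0"
    proof (rule ext, clarify)
      fix p q
      show "delta2_mid deg D (\<lambda>c. phi c - psi c) h (p, q) = 0 (p, q)"
      proof (cases "deg p + deg q \<le> N")
        case True
        let ?n = "N - (deg p + deg q)"
        have "delta2_mid deg D (\<lambda>c. phi c - psi c) h (p, q) = delta2_mid deg D (chi ?n) h (p, q)"
          using dmid_chi[OF hN, where n = ?n and p = p and q = q] True by simp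
        also have "\<dots> = pair (conv deg D (conv deg D (unitv p) (chi ?n)) (unitv q)) h"
          by (rule pair_units[OF h, symmetric])
        also have "\<dots> = 0"
          using hT I_convL[OF I_convR[OF chi_I unitv_Hset] unitv_Hset] by (simp add: TT_def)
        finally show ?thesis by simp
      next
        case False
        then show ?thesis using dmid_zero_big[OF hN] by simp
      qed
    qed
  next
    assume d: "delta2_mid deg D (\<lambda>c. phi c - psi c) h = 0"
    have z: "delta2_mid deg D (chi n) h (p, q) = 0" for n p q
      using dmid_chi[OF hN, where n = n and p = p and q = q] d by simp
    show "h \<in> TT" unfolding TT_def
      using h KK_pair_zero[OF h z] I_sub_KK by blast
  qed
qed

end

theorem theorem5p3:
  fixes deg :: "'b \<Rightarrow> nat" and u :: 'b
    and M D :: "'b \<Rightarrow> 'b \<Rightarrow> 'b \<Rightarrow> 'k::field" and eps :: "'b \<Rightarrow> 'k" and A :: "'b \<Rightarrow> 'b \<Rightarrow> 'k"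
    and phi psi :: "'b \<Rightarrow> 'k"
  assumes "graded_connected_hopf deg u M D eps A"
    and "character deg u M phi" and "character deg u M psi"
  shows "Sset deg D phi psi = {h \<in> Hset. \<forall>f\<in>Iset deg D phi psi. pair f h = 0}
    \<and> graded_hopf_ideal_dual deg u M D A (Iset deg D phi psi)
    \<and> graded_hopf_subalg deg u M D A (Sset deg D phi psi)
    \<and> (\<forall>h \<in> Hset. homogeneous deg h \<longrightarrow>
          (h \<in> Sset deg D phi psi \<longleftrightarrow> delta2_mid deg D (\<lambda>c. phi c - psi c) h = 0))"
proof -
  interpret g: gchc deg u M D eps A phi psi
    using assms by (simp add: gchc_def gch_def gchc_axioms_def)
  show ?thesis
    using g.Sset_eq g.I_hopf g.TT_hopf g.part_d unfolding g.TT_def by auto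
qed

end
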